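(* Let $\mathfrak a$ and $A$ be as in the context. Let $R$ be an $A$-module with a decreasing filtration by $A$-submodules $({}^iR)_{i\in\mathbb Z}$ such that ${}^iR=R$ for $i\ll0$, ${}^iR=0$ for $i\gg0$, and each ${}^iR/{}^{i+1}R$ is projective as an $\mathfrak a$-module. Let $N$ be an admissible hybrid $A$-module and $m$ an integer with $\mathfrak aN_m=N_{\ge m}$. Suppose $\phi:R\twoheadrightarrow N$ is a surjection of $A$-modules such that $\phi({}^iR)=N_{\ge i}$ for all $i\le m$, and ${}^iR=0$ for $i>m$. Then there is a choice of $\mathfrak a_0$-submodules $h_i\subseteq{}^iR$, each an $\mathfrak a_0$-stable complement to ${}^{i+1}R+\mathrm{rad}^\flat({}^iR)$ in ${}^iR$, with $\phi(h_i)\subseteq N_i$ for all $i$. The induced $\mathfrak a$-grading on $R$ (placing $h_i$ in grade $i$) makes $R$ an admissible hybrid $A$-module and $\phi$ a surjective morphism of admissible hybrid $A$-modules.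
   Context: All algebras/modules finite dimensional over a field. $\mathfrak a=\bigoplus_{n\ge0}\mathfrak a_n$ is positively graded and $\mathfrak a\to A$ is an algebra homomorphism such that $\mathfrak a_{\ge j}A$ is a two-sided ideal of $A$ for every $j\ge0$, where $\mathfrak a_{\ge j}=\bigoplus_{i\ge j}\mathfrak a_i$. For an $\mathfrak a$-module $X$, $\mathrm{rad}^\flat X=\mathfrak a_{\ge1}X$. A hybrid $A$-module is an $A$-module with a fixed grading making it a graded $\mathfrak a$-module; it is admissible if each $N_{\ge j}=\bigoplus_{i\ge j}N_i$ is an $A$-submodule; morphisms are grading-preserving $A$-maps. *)

theory Defs
  imports Main "HOL.Vector_Spaces"
begin

text \<open>A finite-dimensional
k-algebra is a type of class ring_1 together with a k-scalar multiplication;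
modules are types of class ab_group_add with a k-scalar multiplication and an
action of the algebra.\<close>

definition fin_dim :: "('k::field \<Rightarrow> 'v::ab_group_add \<Rightarrow> 'v) \<Rightarrow> bool" where
  "fin_dim s \<longleftrightarrow> (\<exists>B. finite B \<and> module.span s B = UNIV)"

definition k_algebra :: "('k::field \<Rightarrow> 'a::ring_1 \<Rightarrow> 'a) \<Rightarrow> bool" where
  "k_algebra s \<longleftrightarrow> vector_space s \<and> fin_dim s \<and>
     (\<forall>c x y. s c (x * y) = s c x * y \<and> s c (x * y) = x * s c y)"

definition alg_hom :: "('k::field \<Rightarrow> 'a::ring_1 \<Rightarrow> 'a) \<Rightarrow> ('k \<Rightarrow> 'b::ring_1 \<Rightarrow> 'b)
    \<Rightarrow> ('a \<Rightarrow> 'b) \<Rightarrow> bool" where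
  "alg_hom sa sb f \<longleftrightarrow> f 1 = 1 \<and> (\<forall>x y. f (x * y) = f x * f y \<and> f (x + y) = f x + f y)
     \<and> (\<forall>c x. f (sa c x) = sb c (f x))"

definition alg_module :: "('k::field \<Rightarrow> 'A::ring_1 \<Rightarrow> 'A) \<Rightarrow> ('k \<Rightarrow> 'm::ab_group_add \<Rightarrow> 'm)
    \<Rightarrow> ('A \<Rightarrow> 'm \<Rightarrow> 'm) \<Rightarrow> bool" where
  "alg_module sA sM act \<longleftrightarrow> vector_space sM \<and> fin_dim sM \<and>
     (\<forall>v. act 1 v = v) \<and>
     (\<forall>x y v. act (x * y) v = act x (act y v)) \<and>
     (\<forall>x y v. act (x + y) v = act x v + act y v) \<and>
     (\<forall>x v w. act x (v + w) = act x v + act x w) \<and>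
     (\<forall>c x v. act (sA c x) v = sM c (act x v)) \<and>
     (\<forall>c x v. act x (sM c v) = sM c (act x v))"

definition is_dsum :: "('k::field \<Rightarrow> 'v::ab_group_add \<Rightarrow> 'v) \<Rightarrow> ('i \<Rightarrow> 'v set) \<Rightarrow> bool" where
  "is_dsum s G \<longleftrightarrow> (\<forall>i. module.subspace s (G i)) \<and>
     (\<forall>x. \<exists>!g. finite {i. g i \<noteq> 0} \<and> (\<forall>i. g i \<in> G i) \<and> x = sum g {i. g i \<noteq> 0})"

definition pos_graded :: "('k::field \<Rightarrow> 'a::ring_1 \<Rightarrow> 'a) \<Rightarrow> (nat \<Rightarrow> 'a set) \<Rightarrow> bool" where
  "pos_graded s ag \<longleftrightarrow> is_dsum s ag \<and>
     (\<forall>i j x y. x \<in> ag i \<longrightarrow> y \<in> ag j \<longrightarrow> x * y \<in> ag (i + j))"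

definition alg_ge :: "('k::field \<Rightarrow> 'a::ring_1 \<Rightarrow> 'a) \<Rightarrow> (nat \<Rightarrow> 'a set) \<Rightarrow> nat \<Rightarrow> 'a set" where
  "alg_ge s ag j = module.span s (\<Union>i\<in>{j..}. ag i)"

definition mod_ge :: "('k::field \<Rightarrow> 'v::ab_group_add \<Rightarrow> 'v) \<Rightarrow> (int \<Rightarrow> 'v set) \<Rightarrow> int \<Rightarrow> 'v set" where
  "mod_ge s G j = module.span s (\<Union>i\<in>{j..}. G i)"

definition act_span :: "('k::field \<Rightarrow> 'm::ab_group_add \<Rightarrow> 'm) \<Rightarrow> ('A \<Rightarrow> 'm \<Rightarrow> 'm)
    \<Rightarrow> ('a \<Rightarrow> 'A) \<Rightarrow> 'a set \<Rightarrow> 'm set \<Rightarrow> 'm set" where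
  "act_span sM act f S X = module.span sM {act (f x) v | x v. x \<in> S \<and> v \<in> X}"

definition rad_flat :: "('k::field \<Rightarrow> 'a::ring_1 \<Rightarrow> 'a) \<Rightarrow> (nat \<Rightarrow> 'a set)
    \<Rightarrow> ('k \<Rightarrow> 'm::ab_group_add \<Rightarrow> 'm) \<Rightarrow> ('A \<Rightarrow> 'm \<Rightarrow> 'm) \<Rightarrow> ('a \<Rightarrow> 'A) \<Rightarrow> 'm set \<Rightarrow> 'm set" where
  "rad_flat sa ag sM act f X = act_span sM act f (alg_ge sa ag 1) X"

text \<open>Standing assumption: a_{>=j} A is a two-sided ideal of A for every j.\<close>
definition ideal_condition :: "('k::field \<Rightarrow> 'a::ring_1 \<Rightarrow> 'a) \<Rightarrow> (nat \<Rightarrow> 'a set)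
    \<Rightarrow> ('k \<Rightarrow> 'A::ring_1 \<Rightarrow> 'A) \<Rightarrow> ('a \<Rightarrow> 'A) \<Rightarrow> bool" where
  "ideal_condition sa ag sA f \<longleftrightarrow>
     (\<forall>j. \<forall>w \<in> module.span sA {f x * y | x y. x \<in> alg_ge sa ag j}.
          \<forall>z. z * w \<in> module.span sA {f x * y | x y. x \<in> alg_ge sa ag j}
            \<and> w * z \<in> module.span sA {f x * y | x y. x \<in> alg_ge sa ag j})"

definition A_submodule :: "('k::field \<Rightarrow> 'm::ab_group_add \<Rightarrow> 'm) \<Rightarrow> ('A \<Rightarrow> 'm \<Rightarrow> 'm) \<Rightarrow> 'm set \<Rightarrow> bool" where
  "A_submodule sM act X \<longleftrightarrow> module.subspace sM X \<and> (\<forall>z. \<forall>v\<in>X. act z v \<in> X)"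

definition graded_amod :: "('k::field \<Rightarrow> 'm::ab_group_add \<Rightarrow> 'm) \<Rightarrow> ('A \<Rightarrow> 'm \<Rightarrow> 'm)
    \<Rightarrow> ('a \<Rightarrow> 'A) \<Rightarrow> (nat \<Rightarrow> 'a set) \<Rightarrow> (int \<Rightarrow> 'm set) \<Rightarrow> bool" where
  "graded_amod sM act f ag G \<longleftrightarrow> is_dsum sM G \<and>
     (\<forall>i j x v. x \<in> ag i \<longrightarrow> v \<in> G j \<longrightarrow> act (f x) v \<in> G (j + int i))"

definition admissible_hybrid :: "('k::field \<Rightarrow> 'A::ring_1 \<Rightarrow> 'A) \<Rightarrow> ('k \<Rightarrow> 'm::ab_group_add \<Rightarrow> 'm)
    \<Rightarrow> ('A \<Rightarrow> 'm \<Rightarrow> 'm) \<Rightarrow> ('a \<Rightarrow> 'A) \<Rightarrow> (nat \<Rightarrow> 'a set) \<Rightarrow> (int \<Rightarrow> 'm set) \<Rightarrow> bool" where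
  "admissible_hybrid sA sM act f ag G \<longleftrightarrow> alg_module sA sM act \<and> graded_amod sM act f ag G \<and>
     (\<forall>j. A_submodule sM act (mod_ge sM G j))"

definition A_hom :: "('k::field \<Rightarrow> 'm::ab_group_add \<Rightarrow> 'm) \<Rightarrow> ('A \<Rightarrow> 'm \<Rightarrow> 'm)
    \<Rightarrow> ('k \<Rightarrow> 'n::ab_group_add \<Rightarrow> 'n) \<Rightarrow> ('A \<Rightarrow> 'n \<Rightarrow> 'n) \<Rightarrow> ('m \<Rightarrow> 'n) \<Rightarrow> bool" where
  "A_hom sM actM sN actN \<phi> \<longleftrightarrow> (\<forall>v w. \<phi> (v + w) = \<phi> v + \<phi> w) \<and>
     (\<forall>c v. \<phi> (sM c v) = sN c (\<phi> v)) \<and> (\<forall>z v. \<phi> (actM z v) = actN z (\<phi> v))"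

text \<open>Free a-module of rank n: functions nat => 'a vanishing from n on, with
componentwise left action.\<close>
definition free_amod :: "nat \<Rightarrow> (nat \<Rightarrow> 'a::ring_1) set" where
  "free_amod n = {g. \<forall>i\<ge>n. g i = 0}"

text \<open>The quotient a-module U/V (V \<subseteq> U submodules of an A-module, a acting through f)
is projective, i.e. a direct summand of a free a-module of finite rank:
there are a-linear maps p from the free module to U and s from U to the free module,
s vanishing on V, such that p o s induces the identity of U/V.\<close>
definition proj_quot :: "('A \<Rightarrow> 'm::ab_group_add \<Rightarrow> 'm) \<Rightarrow> ('a::ring_1 \<Rightarrow> 'A)
    \<Rightarrow> 'm set \<Rightarrow> 'm set \<Rightarrow> bool" where
  "proj_quot act f U V \<longleftrightarrow> (\<exists>n p s.
     (\<forall>g\<in>free_amod n. p g \<in> U) \<and>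
     (\<forall>g\<in>free_amod n. \<forall>h\<in>free_amod n. p (\<lambda>i. g i + h i) = p g + p h) \<and>
     (\<forall>g\<in>free_amod n. \<forall>x. p (\<lambda>i. x * g i) = act (f x) (p g)) \<and>
     (\<forall>u\<in>U. s u \<in> free_amod n) \<and>
     (\<forall>u\<in>U. \<forall>w\<in>U. s (u + w) = (\<lambda>i. s u i + s w i)) \<and>
     (\<forall>u\<in>U. \<forall>x. s (act (f x) u) = (\<lambda>i. x * s u i)) \<and>
     (\<forall>v\<in>V. s v = (\<lambda>i. 0)) \<and>
     (\<forall>u\<in>U. p (s u) - u \<in> V))"

end

theory Submission
  imports Defs
begin


lemma vimage_subspace:
  assumes "vector_space s1" "vector_space s2"
    and add: "\<And>v w. g (v+w) = g v + g w" and sc: "\<And>c v. g (s1 c v) = s2 c (g v)"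
    and S: "module.subspace s2 S"
  shows "module.subspace s1 {v. g v \<in> S}"
proof -
  interpret V1: vector_space s1 by fact
  interpret V2: vector_space s2 by fact
  have g0: "g 0 = 0" using add[of 0 0] by simp
  show ?thesis unfolding V1.subspace_def
    using S g0 add sc V2.subspace_0 V2.subspace_add V2.subspace_scale by auto
qed

lemma image_span_sub:
  assumes "vector_space s1" "vector_space s2"
    and add: "\<And>v w. g (v+w) = g v + g w" and sc: "\<And>c v. g (s1 c v) = s2 c (g v)"
    and S: "module.subspace s2 S" and gen: "\<And>x. x \<in> X \<Longrightarrow> g x \<in> S"
    and x: "x \<in> module.span s1 X"
  shows "g x \<in> S"
proof -
  interpret V1: vector_space s1 by fact
  have "module.subspace s1 {v. g v \<in> S}" by (rule vimage_subspace[OF assms(1-5)])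
  then show ?thesis using V1.span_minimal[of X "{v. g v \<in> S}"] gen x by auto
qed

locale P8 =
  fixes sa :: "'k::field \<Rightarrow> 'a::ring_1 \<Rightarrow> 'a" and ag :: "nat \<Rightarrow> 'a set"
    and sA :: "'k \<Rightarrow> 'A::ring_1 \<Rightarrow> 'A" and f :: "'a \<Rightarrow> 'A"
    and sR :: "'k \<Rightarrow> 'r::ab_group_add \<Rightarrow> 'r" and actR :: "'A \<Rightarrow> 'r \<Rightarrow> 'r"
    and F :: "int \<Rightarrow> 'r set"
    and sN :: "'k \<Rightarrow> 'n::ab_group_add \<Rightarrow> 'n" and actN :: "'A \<Rightarrow> 'n \<Rightarrow> 'n"
    and NG :: "int \<Rightarrow> 'n set"
    and m :: int and \<phi> :: "'r \<Rightarrow> 'n"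
  assumes alg_a: "k_algebra sa" and graded_a: "pos_graded sa ag"
    and alg_A: "k_algebra sA" and hom_f: "alg_hom sa sA f"
    and ideals: "ideal_condition sa ag sA f"
    and mod_R: "alg_module sA sR actR"
    and filt_sub: "\<forall>i. A_submodule sR actR (F i)"
    and filt_dec: "\<forall>i. F (i + 1) \<subseteq> F i"
    and filt_low: "\<exists>i0. \<forall>i\<le>i0. F i = UNIV"
    and filt_high: "\<exists>i1. \<forall>i\<ge>i1. F i = {0}"
    and filt_proj: "\<forall>i. proj_quot actR f (F i) (F (i + 1))"
    and N_adm: "admissible_hybrid sA sN actN f ag NG"
    and gen_m: "act_span sN actN f UNIV (NG m) = mod_ge sN NG m"
    and phi_hom: "A_hom sR actR sN actN \<phi>" and phi_surj: "surj \<phi>"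
    and phi_filt: "\<forall>i\<le>m. \<phi> ` F i = mod_ge sN NG i"
    and F_vanish: "\<forall>i>m. F i = {0}"
begin

lemma vs_a: "vector_space sa" using alg_a unfolding k_algebra_def by auto
lemma vs_A: "vector_space sA" using alg_A unfolding k_algebra_def by auto
lemma vs_R: "vector_space sR" using mod_R unfolding alg_module_def by auto
lemma mod_N: "alg_module sA sN actN" using N_adm unfolding admissible_hybrid_def by auto
lemma vs_N: "vector_space sN" using mod_N unfolding alg_module_def by auto

sublocale Va: vector_space sa by (rule vs_a)
sublocale VA: vector_space sA by (rule vs_A)
sublocale R: vector_space sR by (rule vs_R)
sublocale N: vector_space sN by (rule vs_N)

lemma fin_a: "fin_dim sa" using alg_a unfolding k_algebra_def by auto

lemma sa_mult1: "sa c (x * y) = sa c x * y" using alg_a unfolding k_algebra_def by blast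
lemma sa_mult2: "sa c (x * y) = x * sa c y" using alg_a unfolding k_algebra_def by blast
lemma sA_mult1: "sA c (x * y) = sA c x * y" using alg_A unfolding k_algebra_def by blast

lemma f_one: "f 1 = 1" using hom_f unfolding alg_hom_def by auto
lemma f_mult: "f (x * y) = f x * f y" using hom_f unfolding alg_hom_def by auto
lemma f_add: "f (x + y) = f x + f y" using hom_f unfolding alg_hom_def by auto
lemma f_scale: "f (sa c x) = sA c (f x)" using hom_f unfolding alg_hom_def by auto
lemma f_zero: "f 0 = 0" using f_add[of 0 0] by simp
lemma f_diff: "f (x - y) = f x - f y"
  using f_add[of "x - y" y] by (simp add: eq_diff_eq)

lemma actR_one: "actR 1 v = v" using mod_R unfolding alg_module_def by auto
lemma actR_mult: "actR (x * y) v = actR x (actR y v)" using mod_R unfolding alg_module_def by auto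
lemma actR_addz: "actR (x + y) v = actR x v + actR y v" using mod_R unfolding alg_module_def by auto
lemma actR_addv: "actR x (v + w) = actR x v + actR x w" using mod_R unfolding alg_module_def by auto
lemma actR_scalez: "actR (sA c x) v = sR c (actR x v)" using mod_R unfolding alg_module_def by auto
lemma actR_scalev: "actR x (sR c v) = sR c (actR x v)" using mod_R unfolding alg_module_def by auto

lemma actN_addz: "actN (x + y) v = actN x v + actN y v" using mod_N unfolding alg_module_def by auto
lemma actN_addv: "actN x (v + w) = actN x v + actN x w" using mod_N unfolding alg_module_def by auto
lemma actN_scalev: "actN x (sN c v) = sN c (actN x v)" using mod_N unfolding alg_module_def by auto

lemma phi_add: "\<phi> (v + w) = \<phi> v + \<phi> w" using phi_hom unfolding A_hom_def by auto
lemma phi_scale: "\<phi> (sR c v) = sN c (\<phi> v)" using phi_hom unfolding A_hom_def by auto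
lemma phi_act: "\<phi> (actR z v) = actN z (\<phi> v)" using phi_hom unfolding A_hom_def by auto

interpretation phiA: additive \<phi> by standard (rule phi_add)
lemma phi_zero: "\<phi> 0 = 0" by (rule phiA.zero)
lemma phi_diff: "\<phi> (x - y) = \<phi> x - \<phi> y" by (rule phiA.diff)

lemma actR_additive_v: "additive (actR z)" by standard (rule actR_addv)
lemma actR_additive_z: "additive (\<lambda>z. actR z v)" by standard (rule actR_addz)

lemma actR_zerov[simp]: "actR z 0 = 0" using additive.zero[OF actR_additive_v] .
lemma actR_zeroz[simp]: "actR 0 v = 0" using additive.zero[OF actR_additive_z] .
lemma actR_diffv: "actR z (v - w) = actR z v - actR z w" using additive.diff[OF actR_additive_v] .
lemma actR_diffz: "actR (x - y) v = actR x v - actR y v" using additive.diff[OF actR_additive_z] .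
lemma actR_sumv: "actR z (sum g S) = (\<Sum>x\<in>S. actR z (g x))" using additive.sum[OF actR_additive_v] .
lemma actR_sumz: "actR (sum g S) v = (\<Sum>x\<in>S. actR (g x) v)" using additive.sum[OF actR_additive_z] .

abbreviation rho where "rho x \<equiv> actR (f x)"

lemma f_additive: "additive f" by standard (rule f_add)
lemma f_sum: "f (sum g S) = (\<Sum>x\<in>S. f (g x))" using additive.sum[OF f_additive] .

lemma rho_mult: "rho (x * y) v = rho x (rho y v)" by (simp add: f_mult actR_mult)
lemma rho_add: "rho (x + y) v = rho x v + rho y v" by (simp add: f_add actR_addz)
lemma rho_diff: "rho (x - y) v = rho x v - rho y v" by (simp add: f_diff actR_diffz)
lemma rho_scale: "rho (sa c x) v = sR c (rho x v)" by (simp add: f_scale actR_scalez)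
lemma rho_zero[simp]: "rho 0 v = 0" by (simp add: f_zero)
lemma rho_sumz: "rho (sum g S) v = (\<Sum>x\<in>S. rho (g x) v)" by (simp add: f_sum actR_sumz)
lemma rho_one: "rho 1 v = v" by (simp add: f_one actR_one)

lemma sR_as_rho: "sR c v = rho (sa c 1) v"
  by (simp add: f_scale f_one actR_scalez actR_one)

lemma sa_left: "sa c x = sa c 1 * x" using sa_mult1[of c 1 x] by simp
lemma sa_right: "sa c x = x * sa c 1" using sa_mult2[of c x 1] by simp

lemma sub_actR: "R.subspace S \<Longrightarrow> R.subspace {v. actR z v \<in> S}"
  by (rule vimage_subspace[where g="actR z", OF vs_R vs_R]) (simp_all add: actR_addv actR_scalev)
lemma sub_rho_a: "R.subspace S \<Longrightarrow> Va.subspace {x. rho x v \<in> S}"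
  by (rule vimage_subspace[where g="\<lambda>x. rho x v", OF vs_a vs_R]) (simp_all add: rho_add rho_scale)
lemma sub_act_A: "R.subspace S \<Longrightarrow> VA.subspace {z. actR z v \<in> S}"
  by (rule vimage_subspace[where g="\<lambda>z. actR z v", OF vs_A vs_R]) (simp_all add: actR_addz actR_scalez)

lemma dsum_a: "is_dsum sa ag" using graded_a unfolding pos_graded_def by auto
lemma ag_sub: "Va.subspace (ag d)" using dsum_a unfolding is_dsum_def by auto
lemma ag_mult: "x \<in> ag i \<Longrightarrow> y \<in> ag j \<Longrightarrow> x * y \<in> ag (i + j)"
  using graded_a unfolding pos_graded_def by auto
lemma ag0: "0 \<in> ag d" using ag_sub Va.subspace_0 by blast

definition dec :: "'a \<Rightarrow> nat \<Rightarrow> 'a" where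
  "dec x = (THE g. finite {i. g i \<noteq> 0} \<and> (\<forall>i. g i \<in> ag i) \<and> x = sum g {i. g i \<noteq> 0})"

lemma dec_ex1: "\<exists>!g. finite {i. g i \<noteq> 0} \<and> (\<forall>i. g i \<in> ag i) \<and> x = sum g {i. g i \<noteq> 0}"
  using dsum_a unfolding is_dsum_def by auto

lemma dec: "finite {i. dec x i \<noteq> 0} \<and> (\<forall>i. dec x i \<in> ag i) \<and> x = sum (dec x) {i. dec x i \<noteq> 0}"
  unfolding dec_def by (rule theI'[OF dec_ex1])

lemma dec_in: "dec x i \<in> ag i" using dec by blast
lemma dec_fin: "finite {i. dec x i \<noteq> 0}" using dec by blast
lemma dec_eq: "x = sum (dec x) {i. dec x i \<noteq> 0}" by (rule conjunct2[OF conjunct2[OF dec]])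

lemma dec_eqI:
  assumes fin: "finite S" and g: "\<And>i. g i \<in> ag i" and z: "\<And>i. i \<notin> S \<Longrightarrow> g i = 0"
    and x: "x = sum g S"
  shows "dec x = g"
proof -
  have sub: "{i. g i \<noteq> 0} \<subseteq> S" using z by auto
  have "sum g S = sum g {i. g i \<noteq> 0}"
    by (rule sum.mono_neutral_right[OF fin sub]) auto
  then have P: "finite {i. g i \<noteq> 0} \<and> (\<forall>i. g i \<in> ag i) \<and> x = sum g {i. g i \<noteq> 0}"
    using fin sub g x finite_subset by auto
  show ?thesis unfolding dec_def by (rule the1_equality[OF dec_ex1[of x]]) (rule P)
qed

lemma dec_sum_sup:
  assumes "finite S" "{i. dec x i \<noteq> 0} \<subseteq> S" shows "x = sum (dec x) S"
proof -
  have "sum (dec x) S = sum (dec x) {i. dec x i \<noteq> 0}"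
    by (rule sum.mono_neutral_right[OF assms]) auto
  then show ?thesis using dec_eq[of x] by argo
qed

lemma dec_add: "dec (x + y) = (\<lambda>i. dec x i + dec y i)"
proof (rule dec_eqI[where S="{i. dec x i \<noteq> 0} \<union> {i. dec y i \<noteq> 0}"])
  show "finite ({i. dec x i \<noteq> 0} \<union> {i. dec y i \<noteq> 0})" using dec_fin by auto
  show "dec x i + dec y i \<in> ag i" for i using ag_sub dec_in Va.subspace_add by blast
  show "i \<notin> {i. dec x i \<noteq> 0} \<union> {i. dec y i \<noteq> 0} \<Longrightarrow> dec x i + dec y i = 0" for i by auto
  have "x = sum (dec x) ({i. dec x i \<noteq> 0} \<union> {i. dec y i \<noteq> 0})"
    by (rule dec_sum_sup) (use dec_fin in auto)
  moreover have "y = sum (dec y) ({i. dec x i \<noteq> 0} \<union> {i. dec y i \<noteq> 0})"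
    by (rule dec_sum_sup) (use dec_fin in auto)
  ultimately show "x + y = (\<Sum>i\<in>{i. dec x i \<noteq> 0} \<union> {i. dec y i \<noteq> 0}. dec x i + dec y i)"
    using sum.distrib[of "dec x" "dec y" "{i. dec x i \<noteq> 0} \<union> {i. dec y i \<noteq> 0}"] by argo
qed

lemma dec_scale: "dec (sa c x) = (\<lambda>i. sa c (dec x i))"
proof (rule dec_eqI[where S="{i. dec x i \<noteq> 0}"])
  show "finite {i. dec x i \<noteq> 0}" by (rule dec_fin)
  show "sa c (dec x i) \<in> ag i" for i using ag_sub dec_in Va.subspace_scale by blast
  show "i \<notin> {i. dec x i \<noteq> 0} \<Longrightarrow> sa c (dec x i) = 0" for i by auto
  show "sa c x = (\<Sum>i\<in>{i. dec x i \<noteq> 0}. sa c (dec x i))"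
    by (subst dec_eq[of x]) (rule Va.scale_sum_right)
qed

lemma dec_hom: "x \<in> ag e \<Longrightarrow> dec x = (\<lambda>i. if i = e then x else 0)"
  by (rule dec_eqI[where S="{e}"]) (auto simp: ag0)

lemma dec_zero: "dec 0 = (\<lambda>i. 0)" using dec_hom[OF ag0[of 0]] by auto

lemma dec_additive: "additive (\<lambda>x. dec x i)" by standard (simp add: dec_add)
lemma dec_diff: "dec (x - y) i = dec x i - dec y i" using additive.diff[OF dec_additive] .
lemma dec_sum: "dec (sum g S) i = (\<Sum>x\<in>S. dec (g x) i)" using additive.sum[OF dec_additive] .
lemma dec_uminus: "dec (- x) i = - dec x i" using additive.minus[OF dec_additive] .

lemma dec_mult0: assumes x: "x \<in> ag 0" shows "dec (x * y) = (\<lambda>i. x * dec y i)"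
proof (rule dec_eqI[where S="{i. dec y i \<noteq> 0}"])
  show "finite {i. dec y i \<noteq> 0}" by (rule dec_fin)
  show "x * dec y i \<in> ag i" for i using ag_mult[OF x dec_in[of y i]] by simp
  show "i \<notin> {i. dec y i \<noteq> 0} \<Longrightarrow> x * dec y i = 0" for i by auto
  show "x * y = (\<Sum>i\<in>{i. dec y i \<noteq> 0}. x * dec y i)"
    by (subst dec_eq[of y]) (rule sum_distrib_left)
qed

lemma dec0_mult0: "x \<in> ag 0 \<Longrightarrow> dec (x * y) 0 = x * dec y 0" by (simp add: dec_mult0)

lemma alg_ge_sub: "Va.subspace (alg_ge sa ag d)" unfolding alg_ge_def by simp
lemma ag_alg_ge: "d \<le> e \<Longrightarrow> x \<in> ag e \<Longrightarrow> x \<in> alg_ge sa ag d"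
  unfolding alg_ge_def by (rule Va.span_base) auto

lemma alg_ge_dec: assumes "x \<in> alg_ge sa ag d" "i < d" shows "dec x i = 0"
proof -
  have "x \<in> {x. dec x i = 0}"
  proof (rule Va.span_subspace_induct[OF assms(1)[unfolded alg_ge_def]])
    show "Va.subspace {x. dec x i = 0}"
      unfolding Va.subspace_def by (auto simp: dec_add dec_scale dec_zero)
    show "x \<in> {x. dec x i = 0}" if "x \<in> (\<Union>i\<in>{d..}. ag i)" for x
      using that assms(2) by (auto simp: dec_hom)
  qed
  then show ?thesis by simp
qed

lemma alg_ge_decI: assumes "\<And>i. i < d \<Longrightarrow> dec x i = 0" shows "x \<in> alg_ge sa ag d"
proof -
  have "x = sum (dec x) {i. dec x i \<noteq> 0}" by (rule dec_eq)
  also have "\<dots> \<in> alg_ge sa ag d"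
  proof (rule Va.subspace_sum[OF alg_ge_sub])
    fix i assume "i \<in> {i. dec x i \<noteq> 0}"
    then have "\<not> i < d" using assms by auto
    then show "dec x i \<in> alg_ge sa ag d" by (meson ag_alg_ge dec_in not_less)
  qed
  finally show ?thesis .
qed

lemma alg_ge_0: "x \<in> alg_ge sa ag 0" by (rule alg_ge_decI) auto

lemma minus_dec0: "x - dec x 0 \<in> alg_ge sa ag 1"
  by (rule alg_ge_decI) (simp add: dec_diff dec_hom[OF dec_in])

lemma dec0_minus: "dec x 0 - x \<in> alg_ge sa ag 1"
proof -
  have "dec x 0 - x = - (x - dec x 0)" by simp
  then show ?thesis using Va.subspace_neg[OF alg_ge_sub minus_dec0] by simp
qed

lemma alg_ge1_dec0: "x \<in> alg_ge sa ag 1 \<Longrightarrow> dec x 0 = 0" using alg_ge_dec by auto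

lemma alg_ge_mult:
  assumes x: "x \<in> alg_ge sa ag d" and y: "y \<in> alg_ge sa ag e"
  shows "x * y \<in> alg_ge sa ag (d + e)"
proof -
  let ?S = "{i. dec x i \<noteq> 0}" and ?T = "{i. dec y i \<noteq> 0}"
  have "x * y = sum (dec x) ?S * sum (dec y) ?T" using dec_eq[of x] dec_eq[of y] by argo
  also have "\<dots> = (\<Sum>i\<in>?S. \<Sum>j\<in>?T. dec x i * dec y j)" by (rule sum_product)
  also have "\<dots> \<in> alg_ge sa ag (d + e)"
  proof (intro Va.subspace_sum[OF alg_ge_sub])
    fix i j assume i: "i \<in> ?S" and j: "j \<in> ?T"
    then have "d \<le> i" "e \<le> j" using alg_ge_dec[OF x] alg_ge_dec[OF y] not_less by auto
    then show "dec x i * dec y j \<in> alg_ge sa ag (d + e)"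
      using ag_alg_ge[OF _ ag_mult[OF dec_in dec_in]] by simp
  qed
  finally show ?thesis .
qed

lemma alg_ge_mono: "d \<le> e \<Longrightarrow> alg_ge sa ag e \<subseteq> alg_ge sa ag d"
  unfolding alg_ge_def
proof (rule Va.span_mono, rule subsetI)
  fix x assume d: "d \<le> e" and "x \<in> (\<Union>i\<in>{e..}. ag i)"
  then obtain i where "i \<ge> e" "x \<in> ag i" by auto
  then show "x \<in> (\<Union>i\<in>{d..}. ag i)" using d by auto
qed

lemma nilp: "\<exists>D. \<forall>d\<ge>D. ag d = {0}"
proof (rule ccontr)
  assume "\<not> ?thesis"
  then have unb: "\<forall>D. \<exists>d\<ge>D. ag d \<noteq> {0}" by auto
  let ?Z = "{d. ag d \<noteq> {0}}"
  have infZ: "infinite ?Z"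
  proof
    assume "finite ?Z"
    then obtain b where "\<forall>n\<in>?Z. n \<le> b" by (auto simp: finite_nat_set_iff_bounded_le)
    moreover obtain d where "d \<ge> Suc b" "ag d \<noteq> {0}" using unb by blast
    ultimately show False by auto
  qed
  define xx where "xx d = (SOME x. x \<in> ag d \<and> x \<noteq> 0)" for d
  have xx: "xx d \<in> ag d \<and> xx d \<noteq> 0" if "d \<in> ?Z" for d
  proof -
    have "\<exists>x. x \<in> ag d \<and> x \<noteq> 0" using that ag0[of d] by auto
    then show ?thesis unfolding xx_def by (rule someI_ex)
  qed
  have decxx: "dec (xx d) i = (if i = d then xx d else 0)" if "d \<in> ?Z" for d i
    using dec_hom[of "xx d" d] xx[OF that] by simp
  have inj: "inj_on xx ?Z"
  proof (rule inj_onI)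
    fix d e assume d: "d \<in> ?Z" and e: "e \<in> ?Z" and eq: "xx d = xx e"
    show "d = e"
    proof (rule ccontr)
      assume "d \<noteq> e"
      then have "dec (xx e) d = 0" using decxx[OF e] by simp
      then have "xx d = 0" using decxx[OF d, of d] eq by simp
      then show False using xx[OF d] by simp
    qed
  qed
  have infX: "infinite (xx ` ?Z)" using infZ inj finite_imageD by blast
  have ind: "Va.independent (xx ` ?Z)"
    unfolding Va.independent_explicit_module
  proof (intro allI impI)
    fix t u v assume t: "finite t" "t \<subseteq> xx ` ?Z" and s: "(\<Sum>v\<in>t. sa (u v) v) = 0" and v: "v \<in> t"
    obtain d where d: "d \<in> ?Z" "v = xx d" using t v by blast
    have "dec (\<Sum>v\<in>t. sa (u v) v) d = (\<Sum>w\<in>t. sa (u w) (dec w d))"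
      by (simp only: dec_sum dec_scale)
    also have "\<dots> = (\<Sum>w\<in>t. if w = v then sa (u v) v else 0)"
    proof (rule sum.cong[OF refl])
      fix w assume "w \<in> t"
      then obtain e where e: "e \<in> ?Z" "w = xx e" using t by blast
      show "sa (u w) (dec w d) = (if w = v then sa (u v) v else 0)"
      proof (cases "w = v")
        case True then show ?thesis using decxx[OF d(1), of d] d by simp
      next
        case False then have "e \<noteq> d" using d e by auto
        then show ?thesis using decxx[OF e(1), of d] False e(2) by simp
      qed
    qed
    also have "\<dots> = sa (u v) v" using v t(1) by simp
    finally have "sa (u v) v = 0" using s dec_zero by simp
    then show "u v = 0" using xx[OF d(1)] d(2) by simp
  qed
  obtain B where B: "finite B" "Va.span B = UNIV" using fin_a unfolding fin_dim_def by auto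
  have "finite (xx ` ?Z)" using Va.independent_span_bound[OF B(1) ind] B(2) by auto
  then show False using infX by simp
qed

lemma nilp_ge: "\<exists>D. alg_ge sa ag D = {0}"
proof -
  obtain D where D: "\<forall>d\<ge>D. ag d = {0}" using nilp by auto
  have "alg_ge sa ag D = Va.span {0}" unfolding alg_ge_def
    by (rule arg_cong[where f=Va.span]) (use D in auto)
  then show ?thesis using Va.subspace_single_0 Va.span_eq_iff[of "{0}"] by auto
qed

end



definition el :: "nat \<Rightarrow> nat \<Rightarrow> 'a::ring_1" where "el l = (\<lambda>j. if j = l then 1 else 0)"

definition projdata :: "('A \<Rightarrow> 'm::ab_group_add \<Rightarrow> 'm) \<Rightarrow> ('a::ring_1 \<Rightarrow> 'A)
    \<Rightarrow> 'm set \<Rightarrow> 'm set \<Rightarrow> nat \<Rightarrow> ((nat \<Rightarrow> 'a) \<Rightarrow> 'm) \<Rightarrow> ('m \<Rightarrow> nat \<Rightarrow> 'a) \<Rightarrow> bool" where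
  "projdata act f U V n p s \<longleftrightarrow>
     (\<forall>g\<in>free_amod n. p g \<in> U) \<and>
     (\<forall>g\<in>free_amod n. \<forall>h\<in>free_amod n. p (\<lambda>i. g i + h i) = p g + p h) \<and>
     (\<forall>g\<in>free_amod n. \<forall>x. p (\<lambda>i. x * g i) = act (f x) (p g)) \<and>
     (\<forall>u\<in>U. s u \<in> free_amod n) \<and>
     (\<forall>u\<in>U. \<forall>w\<in>U. s (u + w) = (\<lambda>i. s u i + s w i)) \<and>
     (\<forall>u\<in>U. \<forall>x. s (act (f x) u) = (\<lambda>i. x * s u i)) \<and>
     (\<forall>v\<in>V. s v = (\<lambda>i. 0)) \<and>
     (\<forall>u\<in>U. p (s u) - u \<in> V)"

lemma proj_quot_data: "proj_quot act f U V \<longleftrightarrow> (\<exists>n p s. projdata act f U V n p s)"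
  unfolding proj_quot_def projdata_def by simp

lemma el_free: "l < n \<Longrightarrow> el l \<in> free_amod n" unfolding el_def free_amod_def by auto

context P8 begin

lemma F_sub: "R.subspace (F i)" using filt_sub unfolding A_submodule_def by auto
lemma F_act: "v \<in> F i \<Longrightarrow> actR z v \<in> F i" using filt_sub unfolding A_submodule_def by auto
lemma F0: "0 \<in> F i" using F_sub R.subspace_0 by auto

lemma F_mono: assumes "i \<le> j" shows "F j \<subseteq> F i"
proof -
  have "\<forall>k::nat. F (i + int k) \<subseteq> F i"
  proof
    fix k show "F (i + int k) \<subseteq> F i"
    proof (induction k)
      case 0 then show ?case by simp
    next
      case (Suc k)
      have "F (i + int (Suc k)) = F ((i + int k) + 1)" by (simp add: add_ac)
      also have "\<dots> \<subseteq> F (i + int k)" using filt_dec by blast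
      finally show ?case using Suc by blast
    qed
  qed
  then have "F (i + int (nat (j - i))) \<subseteq> F i" by blast
  moreover have "i + int (nat (j - i)) = j" using assms by simp
  ultimately show ?thesis by simp
qed

lemma rad_eq: "rad_flat sa ag sR actR f X = R.span {rho x v | x v. x \<in> alg_ge sa ag 1 \<and> v \<in> X}"
  unfolding rad_flat_def act_span_def by simp

definition Wd where "Wd i = R.span (F (i+1) \<union> rad_flat sa ag sR actR f (F i))"

lemma Wd_sub: "Wd i \<subseteq> F i"
proof -
  have "rad_flat sa ag sR actR f (F i) \<subseteq> F i" unfolding rad_eq
    by (rule R.span_minimal[OF _ F_sub]) (auto intro: F_act)
  moreover have "F (i+1) \<subseteq> F i" using filt_dec by blast
  ultimately show ?thesis unfolding Wd_def by (intro R.span_minimal[OF _ F_sub]) auto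
qed

lemma Wd_subspace: "R.subspace (Wd i)" unfolding Wd_def by simp
lemma F1_Wd: "v \<in> F (i+1) \<Longrightarrow> v \<in> Wd i" unfolding Wd_def by (rule R.span_base) auto
lemma rad_Wd: "v \<in> rad_flat sa ag sR actR f (F i) \<Longrightarrow> v \<in> Wd i" unfolding Wd_def by (rule R.span_base) auto
lemma gen_Wd: "x \<in> alg_ge sa ag 1 \<Longrightarrow> v \<in> F i \<Longrightarrow> rho x v \<in> Wd i"
  by (rule rad_Wd) (auto simp: rad_eq intro!: R.span_base)

lemma Wd_rho: assumes "w \<in> Wd i" shows "rho y w \<in> Wd i"
proof -
  have S: "R.subspace {v. rho y v \<in> Wd i}" by (rule sub_actR[OF Wd_subspace])
  have "rad_flat sa ag sR actR f (F i) \<subseteq> {v. rho y v \<in> Wd i}" unfolding rad_eq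
  proof (rule R.span_minimal[OF _ S], rule subsetI)
    fix u assume "u \<in> {rho x v | x v. x \<in> alg_ge sa ag 1 \<and> v \<in> F i}"
    then obtain x v where u: "u = rho x v" "x \<in> alg_ge sa ag 1" "v \<in> F i" by blast
    have "y * x \<in> alg_ge sa ag (0 + 1)" by (rule alg_ge_mult[OF alg_ge_0 u(2)])
    then have "rho (y * x) v \<in> Wd i" using gen_Wd u(3) by simp
    then show "u \<in> {v. rho y v \<in> Wd i}" using u by (simp add: rho_mult)
  qed
  moreover have "F (i+1) \<subseteq> {v. rho y v \<in> Wd i}" using F_act F1_Wd by auto
  ultimately have sub: "R.span (F (i+1) \<union> rad_flat sa ag sR actR f (F i)) \<subseteq> {v. rho y v \<in> Wd i}"
    by (intro R.span_minimal[OF _ S]) auto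
  from assms have "w \<in> R.span (F (i+1) \<union> rad_flat sa ag sR actR f (F i))" by (simp only: Wd_def)
  with sub show ?thesis by blast
qed

lemma graded_N: "graded_amod sN actN f ag NG" using N_adm unfolding admissible_hybrid_def by auto
lemma NG_sub: "N.subspace (NG j)" using graded_N unfolding graded_amod_def is_dsum_def by auto
lemma NG_act: "x \<in> ag i \<Longrightarrow> v \<in> NG j \<Longrightarrow> actN (f x) v \<in> NG (j + int i)"
  using graded_N unfolding graded_amod_def by auto
lemma actN_diffz: "actN (x - y) v = actN x v - actN y v"
  using actN_addz[of "x - y" y v] by (simp add: eq_diff_eq)

lemma KW: assumes "i \<le> m" "r \<in> F i" shows "\<exists>w\<in>Wd i. \<phi> (r - w) \<in> NG i"
proof -
  let ?Z = "{n. \<exists>w\<in>Wd i. n - \<phi> w \<in> NG i}"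
  have Zsub: "N.subspace ?Z" unfolding N.subspace_def
  proof (intro conjI ballI allI)
    have "0 \<in> Wd i" using R.subspace_0[OF Wd_subspace] .
    then show "0 \<in> ?Z" using N.subspace_0[OF NG_sub]
      by (intro CollectI bexI[of _ 0]) (simp_all add: phi_zero)
  next
    fix x y assume "x \<in> ?Z" "y \<in> ?Z"
    then obtain wx wy where w: "wx \<in> Wd i" "x - \<phi> wx \<in> NG i" "wy \<in> Wd i" "y - \<phi> wy \<in> NG i" by blast
    have "wx + wy \<in> Wd i" using w R.subspace_add[OF Wd_subspace] by blast
    moreover have eq: "(x + y) - \<phi> (wx + wy) = (x - \<phi> wx) + (y - \<phi> wy)" by (simp add: phi_add)
    have "(x + y) - \<phi> (wx + wy) \<in> NG i" by (subst eq) (rule N.subspace_add[OF NG_sub w(2) w(4)])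
    ultimately show "x + y \<in> ?Z" by blast
  next
    fix c x assume "x \<in> ?Z"
    then obtain wx where w: "wx \<in> Wd i" "x - \<phi> wx \<in> NG i" by blast
    have "sR c wx \<in> Wd i" using w R.subspace_scale[OF Wd_subspace] by blast
    moreover have "sN c x - \<phi> (sR c wx) = sN c (x - \<phi> wx)" by (simp add: phi_scale N.scale_right_diff_distrib)
    then have "sN c x - \<phi> (sR c wx) \<in> NG i" using N.subspace_scale[OF NG_sub w(2)] by simp
    ultimately show "sN c x \<in> ?Z" by blast
  qed
  have "\<phi> r \<in> mod_ge sN NG i" using phi_filt assms by auto
  moreover have "mod_ge sN NG i \<subseteq> ?Z"
  proof (cases "i = m")
    case True
    have "mod_ge sN NG m \<subseteq> ?Z" unfolding gen_m[symmetric] act_span_def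
    proof (rule N.span_minimal[OF _ Zsub], rule subsetI)
      fix n assume "n \<in> {actN (f x) v | x v. x \<in> UNIV \<and> v \<in> NG m}"
      then obtain x v where n: "n = actN (f x) v" "v \<in> NG m" by blast
      have "v \<in> mod_ge sN NG m" unfolding mod_ge_def by (rule N.span_base) (use n in auto)
      then obtain u where u: "u \<in> F m" "v = \<phi> u" using phi_filt by auto
      let ?w = "rho (x - dec x 0) u"
      have w: "?w \<in> Wd m" by (rule gen_Wd[OF minus_dec0 u(1)])
      have "n - \<phi> ?w = actN (f x) v - actN (f (x - dec x 0)) v" using n u by (simp add: phi_act)
      also have "\<dots> = actN (f (dec x 0)) v" by (simp add: f_diff actN_diffz)
      also have "\<dots> \<in> NG m" using NG_act[OF dec_in[of x 0] n(2)] by simp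
      finally show "n \<in> ?Z" using w True by auto
    qed
    then show ?thesis using True by simp
  next
    case False
    then have im: "i + 1 \<le> m" using assms by simp
    show ?thesis unfolding mod_ge_def
    proof (rule N.span_minimal[OF _ Zsub], rule subsetI)
      fix n assume "n \<in> (\<Union>j\<in>{i..}. NG j)"
      then obtain j where j: "j \<ge> i" "n \<in> NG j" by auto
      show "n \<in> ?Z"
      proof (cases "j = i")
        case True
        have "0 \<in> Wd i" using R.subspace_0[OF Wd_subspace] .
        then show ?thesis using j True by (auto simp: phi_zero intro!: bexI[of _ 0])
      next
        case False
        have "n \<in> mod_ge sN NG (i+1)" unfolding mod_ge_def
          by (rule N.span_base) (use j False in auto)
        then have "n \<in> \<phi> ` F (i+1)" using phi_filt[rule_format, OF im] by simp
        then obtain u where u: "u \<in> F (i+1)" "n = \<phi> u" by blast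
        then show ?thesis using F1_Wd[OF u(1)] N.subspace_0[OF NG_sub]
          by (intro CollectI bexI[of _ u]) simp_all
      qed
    qed
  qed
  ultimately obtain w where "w \<in> Wd i" "\<phi> r - \<phi> w \<in> NG i" by blast
  then show ?thesis by (auto simp: phi_diff)
qed

lemma data_exists: "\<exists>nn pp ss qq. \<forall>i. projdata actR f (F i) (F (i+1)) (nn i) (pp i) (ss i) \<and>
   (\<forall>l<nn i. qq i l \<in> F i \<and> \<phi> (qq i l) \<in> NG i \<and> pp i (el l) - qq i l \<in> Wd i)"
proof -
  have "\<forall>i. \<exists>t. projdata actR f (F i) (F (i+1)) (fst t) (fst (snd t)) (fst (snd (snd t))) \<and>
   (\<forall>l<fst t. snd (snd (snd t)) l \<in> F i \<and> \<phi> (snd (snd (snd t)) l) \<in> NG i \<and>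
      fst (snd t) (el l) - snd (snd (snd t)) l \<in> Wd i)"
  proof
    fix i
    obtain n p s where pd: "projdata actR f (F i) (F (i+1)) n p s"
      using filt_proj proj_quot_data by blast
    have pin: "l < n \<Longrightarrow> p (el l) \<in> F i" for l using pd el_free unfolding projdata_def by blast
    have "\<exists>q. \<forall>l<n. q l \<in> F i \<and> \<phi> (q l) \<in> NG i \<and> p (el l) - q l \<in> Wd i"
    proof (cases "i \<le> m")
      case True
      have "\<forall>l. \<exists>w. l < n \<longrightarrow> w \<in> Wd i \<and> \<phi> (p (el l) - w) \<in> NG i"
        using KW[OF True] pin by blast
      from choice[OF this] obtain w where w0: "\<forall>l. l < n \<longrightarrow> w l \<in> Wd i \<and> \<phi> (p (el l) - w l) \<in> NG i" by blast
      then have w: "\<And>l. l < n \<Longrightarrow> w l \<in> Wd i \<and> \<phi> (p (el l) - w l) \<in> NG i" by blast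
      show ?thesis
      proof (intro exI[of _ "\<lambda>l. p (el l) - w l"] allI impI conjI)
        fix l assume l: "l < n"
        show "p (el l) - w l \<in> F i" using pin[OF l] w[OF l] Wd_sub R.subspace_diff[OF F_sub] by blast
        show "\<phi> (p (el l) - w l) \<in> NG i" using w[OF l] by blast
        show "p (el l) - (p (el l) - w l) \<in> Wd i" using w[OF l] by simp
      qed
    next
      case False
      then have Fi: "F i = {0}" using F_vanish by auto
      show ?thesis
      proof (intro exI[of _ "\<lambda>l. 0"] allI impI conjI)
        fix l assume l: "l < n"
        show "0 \<in> F i" using Fi by simp
        show "\<phi> 0 \<in> NG i" using N.subspace_0[OF NG_sub] by (simp add: phi_zero)
        show "p (el l) - 0 \<in> Wd i" using pin[OF l] Fi R.subspace_0[OF Wd_subspace] by simp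
      qed
    qed
    then obtain q where "\<forall>l<n. q l \<in> F i \<and> \<phi> (q l) \<in> NG i \<and> p (el l) - q l \<in> Wd i" by blast
    then show "\<exists>t. projdata actR f (F i) (F (i+1)) (fst t) (fst (snd t)) (fst (snd (snd t))) \<and>
   (\<forall>l<fst t. snd (snd (snd t)) l \<in> F i \<and> \<phi> (snd (snd (snd t)) l) \<in> NG i \<and>
      fst (snd t) (el l) - snd (snd (snd t)) l \<in> Wd i)"
      using pd by (intro exI[of _ "(n, p, s, q)"]) simp
  qed
  from choice[OF this] obtain g where g: "\<forall>i. projdata actR f (F i) (F (i+1)) (fst (g i)) (fst (snd (g i))) (fst (snd (snd (g i)))) \<and>
   (\<forall>l<fst (g i). snd (snd (snd (g i))) l \<in> F i \<and> \<phi> (snd (snd (snd (g i))) l) \<in> NG i \<and>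
      fst (snd (g i)) (el l) - snd (snd (snd (g i))) l \<in> Wd i)"
    by blast
  show ?thesis
    by (rule exI[of _ "\<lambda>i. fst (g i)"], rule exI[of _ "\<lambda>i. fst (snd (g i))"],
        rule exI[of _ "\<lambda>i. fst (snd (snd (g i)))"], rule exI[of _ "\<lambda>i. snd (snd (snd (g i)))"])
       (use g in blast)
qed

end




locale P8c = P8 sa ag sA f sR actR F sN actN NG m \<phi>
  for sa :: "'k::field \<Rightarrow> 'a::ring_1 \<Rightarrow> 'a" and ag :: "nat \<Rightarrow> 'a set"
    and sA :: "'k \<Rightarrow> 'A::ring_1 \<Rightarrow> 'A" and f :: "'a \<Rightarrow> 'A"
    and sR :: "'k \<Rightarrow> 'r::ab_group_add \<Rightarrow> 'r" and actR :: "'A \<Rightarrow> 'r \<Rightarrow> 'r"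
    and F :: "int \<Rightarrow> 'r set"
    and sN :: "'k \<Rightarrow> 'n::ab_group_add \<Rightarrow> 'n" and actN :: "'A \<Rightarrow> 'n \<Rightarrow> 'n"
    and NG :: "int \<Rightarrow> 'n set"
    and m :: int and \<phi> :: "'r \<Rightarrow> 'n" +
  fixes nn :: "int \<Rightarrow> nat" and pp :: "int \<Rightarrow> (nat \<Rightarrow> 'a) \<Rightarrow> 'r"
    and ss :: "int \<Rightarrow> 'r \<Rightarrow> nat \<Rightarrow> 'a" and qq :: "int \<Rightarrow> nat \<Rightarrow> 'r"
  assumes pd: "projdata actR f (F i) (F (i+1)) (nn i) (pp i) (ss i)"
    and qq_F: "l < nn i \<Longrightarrow> qq i l \<in> F i"
    and qq_N: "l < nn i \<Longrightarrow> \<phi> (qq i l) \<in> NG i"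
    and qq_W: "l < nn i \<Longrightarrow> pp i (el l) - qq i l \<in> Wd i"
begin

lemma p_in: "g \<in> free_amod (nn i) \<Longrightarrow> pp i g \<in> F i" using pd unfolding projdata_def by blast
lemma p_add: "g \<in> free_amod (nn i) \<Longrightarrow> h \<in> free_amod (nn i) \<Longrightarrow> pp i (\<lambda>j. g j + h j) = pp i g + pp i h"
  using pd unfolding projdata_def by blast
lemma p_mul: "g \<in> free_amod (nn i) \<Longrightarrow> pp i (\<lambda>j. x * g j) = rho x (pp i g)"
  using pd unfolding projdata_def by blast
lemma s_free: "u \<in> F i \<Longrightarrow> ss i u \<in> free_amod (nn i)" using pd unfolding projdata_def by blast
lemma s_add: "u \<in> F i \<Longrightarrow> w \<in> F i \<Longrightarrow> ss i (u + w) = (\<lambda>j. ss i u j + ss i w j)"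
  using pd unfolding projdata_def by blast
lemma s_mul: "u \<in> F i \<Longrightarrow> ss i (rho x u) = (\<lambda>j. x * ss i u j)"
  using pd unfolding projdata_def by blast
lemma s_U: "v \<in> F (i+1) \<Longrightarrow> ss i v = (\<lambda>j. 0)" using pd unfolding projdata_def by blast
lemma ps: "u \<in> F i \<Longrightarrow> pp i (ss i u) - u \<in> F (i+1)" using pd unfolding projdata_def by blast

lemma free0: "(\<lambda>j. 0) \<in> free_amod n" unfolding free_amod_def by simp
lemma free_add: "g \<in> free_amod n \<Longrightarrow> h \<in> free_amod n \<Longrightarrow> (\<lambda>j. g j + h j) \<in> free_amod n"
  unfolding free_amod_def by simp
lemma free_sum: "(\<And>l. l \<in> L \<Longrightarrow> G l \<in> free_amod n) \<Longrightarrow> (\<lambda>j. \<Sum>l\<in>L. G l j) \<in> free_amod n"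
  unfolding free_amod_def by simp
lemma free_mul: "g \<in> free_amod n \<Longrightarrow> (\<lambda>j. x * g j) \<in> free_amod n" unfolding free_amod_def by simp
lemma s_vanish: "u \<in> F i \<Longrightarrow> l \<ge> nn i \<Longrightarrow> ss i u l = 0" using s_free unfolding free_amod_def by blast

lemma s_scale: assumes "u \<in> F i" shows "ss i (sR c u) = (\<lambda>j. sa c (ss i u j))"
  using s_mul[OF assms, of "sa c 1"] by (simp add: sR_as_rho sa_left[symmetric])

lemma s_zero: "ss i 0 = (\<lambda>j. 0)" by (rule s_U[OF F0])

lemma s_sum: "finite L \<Longrightarrow> (\<And>l. l \<in> L \<Longrightarrow> G l \<in> F i) \<Longrightarrow> ss i (sum G L) = (\<lambda>j. \<Sum>l\<in>L. ss i (G l) j)"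
proof (induction L rule: finite_induct)
  case empty then show ?case by (simp add: s_zero)
next
  case (insert a L)
  have "sum G L \<in> F i" using insert R.subspace_sum[OF F_sub] by blast
  then show ?case using insert by (simp add: s_add)
qed

lemma s_diff: assumes "u \<in> F i" "w \<in> F i" shows "ss i (u - w) = (\<lambda>j. ss i u j - ss i w j)"
proof -
  have "u - w \<in> F i" using assms R.subspace_diff[OF F_sub] by blast
  then have "\<forall>j. ss i u j = ss i (u - w) j + ss i w j" using s_add[of "u - w" i w] assms by simp
  then show ?thesis by (simp add: fun_eq_iff eq_diff_eq)
qed

lemma p_zero: "pp i (\<lambda>j. 0) = 0"
  using p_add[OF free0 free0, of i] by simp

lemma p_sum: "finite L \<Longrightarrow> (\<And>l. l \<in> L \<Longrightarrow> G l \<in> free_amod (nn i)) \<Longrightarrow>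
    pp i (\<lambda>j. \<Sum>l\<in>L. G l j) = (\<Sum>l\<in>L. pp i (G l))"
proof (induction L rule: finite_induct)
  case empty then show ?case by (simp add: p_zero)
next
  case (insert a L)
  have "pp i (\<lambda>j. \<Sum>l\<in>insert a L. G l j) = pp i (\<lambda>j. G a j + (\<Sum>l\<in>L. G l j))"
    using insert by simp
  also have "\<dots> = pp i (G a) + pp i (\<lambda>j. \<Sum>l\<in>L. G l j)"
    using insert by (intro p_add free_sum) auto
  finally show ?case using insert by simp
qed

lemma p_expand: assumes g: "g \<in> free_amod (nn i)"
  shows "pp i g = (\<Sum>l<nn i. rho (g l) (pp i (el l)))"
proof -
  have "g = (\<lambda>j. \<Sum>l<nn i. g l * el l j)"
  proof
    fix j show "g j = (\<Sum>l<nn i. g l * el l j)"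
    proof (cases "j < nn i")
      case True
      have "(\<Sum>l<nn i. g l * el l j) = (\<Sum>l<nn i. if l = j then g j else 0)"
        by (rule sum.cong) (auto simp: el_def)
      then show ?thesis using True by simp
    next
      case False then show ?thesis using g unfolding free_amod_def el_def by auto
    qed
  qed
  then have "pp i g = pp i (\<lambda>j. \<Sum>l<nn i. g l * el l j)" by simp
  also have "\<dots> = (\<Sum>l<nn i. pp i (\<lambda>j. g l * el l j))"
    by (rule p_sum) (auto intro: free_mul el_free)
  also have "\<dots> = (\<Sum>l<nn i. rho (g l) (pp i (el l)))"
    by (rule sum.cong[OF refl]) (auto intro: p_mul el_free)
  finally show ?thesis .
qed

definition sbar where "sbar i v = (\<lambda>l. dec (ss i v l) 0)"
definition Pi where "Pi i g = (\<Sum>l<nn i. rho (g l) (qq i l))"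
definition tau where "tau i v = Pi i (sbar i v)"
definition hh where "hh i = tau i ` F i"
definition Etil where "Etil i g = (\<lambda>j. \<Sum>l<nn i. g l * dec (ss i (qq i l) j) 0)"

lemma sbar_ag0: "sbar i v l \<in> ag 0" unfolding sbar_def by (rule dec_in)
lemma sbar_vanish: "v \<in> F i \<Longrightarrow> l \<ge> nn i \<Longrightarrow> sbar i v l = 0"
  unfolding sbar_def by (simp add: s_vanish dec_zero)
lemma sbar_add: "u \<in> F i \<Longrightarrow> w \<in> F i \<Longrightarrow> sbar i (u + w) = (\<lambda>l. sbar i u l + sbar i w l)"
  unfolding sbar_def by (simp add: s_add dec_add)
lemma sbar_diff: "u \<in> F i \<Longrightarrow> w \<in> F i \<Longrightarrow> sbar i (u - w) = (\<lambda>l. sbar i u l - sbar i w l)"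
  unfolding sbar_def by (simp add: s_diff dec_diff)
lemma sbar_scale: "u \<in> F i \<Longrightarrow> sbar i (sR c u) = (\<lambda>l. sa c (sbar i u l))"
  unfolding sbar_def by (simp add: s_scale dec_scale)
lemma sbar_rho0: "x \<in> ag 0 \<Longrightarrow> u \<in> F i \<Longrightarrow> sbar i (rho x u) = (\<lambda>l. x * sbar i u l)"
  unfolding sbar_def by (simp add: s_mul dec0_mult0)
lemma sbar_zero: "sbar i 0 = (\<lambda>l. 0)" unfolding sbar_def by (simp add: s_zero dec_zero)

lemma sbar_W: assumes "w \<in> Wd i" shows "sbar i w = (\<lambda>l. 0)"
proof -
  let ?Q = "{w. w \<in> F i \<and> sbar i w = (\<lambda>l. 0)}"
  have Q: "R.subspace ?Q" unfolding R.subspace_def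
  proof (intro conjI ballI allI)
    show "0 \<in> ?Q" using F0 sbar_zero by simp
    fix x y assume "x \<in> ?Q" "y \<in> ?Q"
    then show "x + y \<in> ?Q" using R.subspace_add[OF F_sub] by (simp add: sbar_add)
  next
    fix c x assume "x \<in> ?Q"
    then show "sR c x \<in> ?Q" using R.subspace_scale[OF F_sub] by (simp add: sbar_scale)
  qed
  have "rad_flat sa ag sR actR f (F i) \<subseteq> ?Q" unfolding rad_eq
  proof (rule R.span_minimal[OF _ Q], rule subsetI)
    fix u assume "u \<in> {rho x v | x v. x \<in> alg_ge sa ag 1 \<and> v \<in> F i}"
    then obtain x v where u: "u = rho x v" "x \<in> alg_ge sa ag 1" "v \<in> F i" by blast
    have "sbar i u = (\<lambda>l. dec (x * ss i v l) 0)" unfolding sbar_def u(1) using u(3) by (simp add: s_mul)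
    also have "\<dots> = (\<lambda>l. 0)"
    proof
      fix l
      have "x * ss i v l \<in> alg_ge sa ag (1 + 0)" by (rule alg_ge_mult[OF u(2) alg_ge_0])
      then show "dec (x * ss i v l) 0 = 0" using alg_ge1_dec0 by simp
    qed
    finally show "u \<in> ?Q" using u F_act by simp
  qed
  moreover have "F (i+1) \<subseteq> ?Q" using filt_dec by (auto simp: sbar_def s_U dec_zero)
  ultimately have "R.span (F (i+1) \<union> rad_flat sa ag sR actR f (F i)) \<subseteq> ?Q"
    by (intro R.span_minimal[OF _ Q]) auto
  moreover from assms have "w \<in> R.span (F (i+1) \<union> rad_flat sa ag sR actR f (F i))" by (simp only: Wd_def)
  ultimately show ?thesis by blast
qed

lemma phi_additive: "additive \<phi>" by standard (rule phi_add)
lemma phi_sum: "\<phi> (sum g S) = (\<Sum>x\<in>S. \<phi> (g x))" using additive.sum[OF phi_additive] .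

lemma Pi_F: "Pi i g \<in> F i"
  unfolding Pi_def by (rule R.subspace_sum[OF F_sub]) (simp add: F_act qq_F)
lemma Pi_add: "Pi i (\<lambda>l. g l + h l) = Pi i g + Pi i h"
  unfolding Pi_def by (simp add: rho_add sum.distrib)
lemma Pi_scale: "Pi i (\<lambda>l. sa c (g l)) = sR c (Pi i g)"
  unfolding Pi_def by (simp add: rho_scale R.scale_sum_right)
lemma Pi_zero: "Pi i (\<lambda>l. 0) = 0" unfolding Pi_def by simp
lemma Pi_rho: "rho x (Pi i g) = Pi i (\<lambda>l. x * g l)"
  unfolding Pi_def by (simp add: actR_sumv rho_mult)
lemma Pi_sum: "Pi i (\<lambda>l. \<Sum>d\<in>D. G d l) = (\<Sum>d\<in>D. Pi i (G d))"
  unfolding Pi_def rho_sumz by (rule sum.swap)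
lemma Pi_NG: assumes "\<And>l. g l \<in> ag 0" shows "\<phi> (Pi i g) \<in> NG i"
proof -
  have "\<phi> (Pi i g) = (\<Sum>l<nn i. actN (f (g l)) (\<phi> (qq i l)))"
    unfolding Pi_def by (simp add: phi_sum phi_act)
  also have "\<dots> \<in> NG i"
    by (rule N.subspace_sum[OF NG_sub]) (use NG_act[OF assms qq_N] in simp)
  finally show ?thesis .
qed

lemma s_Pi: "ss i (Pi i g) = (\<lambda>j. \<Sum>l<nn i. g l * ss i (qq i l) j)"
  unfolding Pi_def by (subst s_sum) (auto simp: F_act qq_F s_mul)

lemma sbar_Pi: assumes "\<And>l. g l \<in> ag 0" shows "sbar i (Pi i g) = Etil i g"
  unfolding sbar_def Etil_def s_Pi by (simp add: dec_sum dec0_mult0[OF assms])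

lemma tau_F: "tau i v \<in> F i" unfolding tau_def by (rule Pi_F)

lemma tau_W: assumes v: "v \<in> F i" shows "v - tau i v \<in> Wd i"
proof -
  have sv: "ss i v \<in> free_amod (nn i)" by (rule s_free[OF v])
  have A: "v - pp i (ss i v) \<in> Wd i"
  proof -
    have "pp i (ss i v) - v \<in> Wd i" using ps[OF v] F1_Wd by blast
    then have "- (pp i (ss i v) - v) \<in> Wd i" using R.subspace_neg[OF Wd_subspace] by blast
    then show ?thesis by simp
  qed
  have "pp i (ss i v) - tau i v = (\<Sum>l<nn i. rho (ss i v l) (pp i (el l)) - rho (dec (ss i v l) 0) (qq i l))"
    unfolding p_expand[OF sv] tau_def Pi_def sbar_def by (simp add: sum_subtractf)
  also have "\<dots> \<in> Wd i"
  proof (rule R.subspace_sum[OF Wd_subspace])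
    fix l assume l: "l \<in> {..<nn i}"
    let ?y = "ss i v l"
    have e: "rho ?y (pp i (el l)) - rho (dec ?y 0) (qq i l)
       = rho (?y - dec ?y 0) (pp i (el l)) + rho (dec ?y 0) (pp i (el l) - qq i l)"
      by (simp add: rho_diff actR_diffv)
    have "rho (?y - dec ?y 0) (pp i (el l)) \<in> Wd i"
      using l by (intro gen_Wd[OF minus_dec0] p_in el_free) auto
    moreover have "rho (dec ?y 0) (pp i (el l) - qq i l) \<in> Wd i"
      using l by (intro Wd_rho qq_W) auto
    ultimately show "rho ?y (pp i (el l)) - rho (dec ?y 0) (qq i l) \<in> Wd i"
      unfolding e using R.subspace_add[OF Wd_subspace] by blast
  qed
  finally have B: "pp i (ss i v) - tau i v \<in> Wd i" .
  have "v - tau i v = (v - pp i (ss i v)) + (pp i (ss i v) - tau i v)" by simp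
  then show ?thesis using R.subspace_add[OF Wd_subspace A B] by simp
qed

lemma sbar_tau: assumes v: "v \<in> F i" shows "sbar i (tau i v) = sbar i v"
proof -
  have "sbar i (v - tau i v) = (\<lambda>l. 0)" by (rule sbar_W[OF tau_W[OF v]])
  then have "(\<lambda>l. sbar i v l - sbar i (tau i v) l) = (\<lambda>l. 0)" using sbar_diff[OF v tau_F] by simp
  then show ?thesis by (auto simp: fun_eq_iff)
qed

lemma tau_tau: "v \<in> F i \<Longrightarrow> tau i (tau i v) = tau i v"
  unfolding tau_def[of i "tau i v"] by (simp add: sbar_tau) (simp add: tau_def)

lemma hh_F: "hh i \<subseteq> F i" unfolding hh_def using tau_F by auto
lemma hh_tau: "v \<in> hh i \<Longrightarrow> tau i v = v" unfolding hh_def using tau_tau by auto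

lemma tau_add: "u \<in> F i \<Longrightarrow> w \<in> F i \<Longrightarrow> tau i (u + w) = tau i u + tau i w"
  unfolding tau_def by (simp add: sbar_add Pi_add)
lemma tau_scale: "u \<in> F i \<Longrightarrow> tau i (sR c u) = sR c (tau i u)"
  unfolding tau_def by (simp add: sbar_scale Pi_scale)
lemma tau_zero: "tau i 0 = 0" unfolding tau_def by (simp add: sbar_zero Pi_zero)

lemma hh_sub: "R.subspace (hh i)"
  unfolding R.subspace_def hh_def
proof (intro conjI ballI allI)
  show "0 \<in> tau i ` F i" by (rule image_eqI[of _ _ 0]) (simp_all add: tau_zero F0)
  fix x y assume "x \<in> tau i ` F i" "y \<in> tau i ` F i"
  then obtain u w where "u \<in> F i" "w \<in> F i" "x = tau i u" "y = tau i w" by blast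
  then show "x + y \<in> tau i ` F i" using R.subspace_add[OF F_sub] tau_add
    by (intro image_eqI[of _ _ "u + w"]) auto
next
  fix c x assume "x \<in> tau i ` F i"
  then obtain u where "u \<in> F i" "x = tau i u" by blast
  then show "sR c x \<in> tau i ` F i" using R.subspace_scale[OF F_sub] tau_scale
    by (intro image_eqI[of _ _ "sR c u"]) auto
qed

lemma hh_ag0: assumes x: "x \<in> ag 0" and v: "v \<in> hh i" shows "rho x v \<in> hh i"
proof -
  obtain u where u: "u \<in> F i" "v = tau i u" using v unfolding hh_def by blast
  have "rho x v = Pi i (\<lambda>l. x * sbar i u l)" unfolding u tau_def by (rule Pi_rho)
  also have "\<dots> = tau i (rho x u)" unfolding tau_def by (simp add: sbar_rho0[OF x u(1)])
  finally show ?thesis unfolding hh_def using F_act[OF u(1)] by blast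
qed

lemma hh_N: "\<phi> ` hh i \<subseteq> NG i"
proof
  fix y assume "y \<in> \<phi> ` hh i"
  then obtain u where "y = \<phi> (tau i u)" unfolding hh_def by blast
  then show "y \<in> NG i" unfolding tau_def using Pi_NG[of "sbar i u", OF sbar_ag0] by simp
qed

lemma hh_compl: "{c + v | c v. c \<in> Wd i \<and> v \<in> hh i} = F i"
proof
  show "{c + v | c v. c \<in> Wd i \<and> v \<in> hh i} \<subseteq> F i"
    using Wd_sub hh_F R.subspace_add[OF F_sub] by blast
  show "F i \<subseteq> {c + v | c v. c \<in> Wd i \<and> v \<in> hh i}"
  proof
    fix r assume r: "r \<in> F i"
    have "r = (r - tau i r) + tau i r" by simp
    moreover have "tau i r \<in> hh i" unfolding hh_def using r by blast
    ultimately show "r \<in> {c + v | c v. c \<in> Wd i \<and> v \<in> hh i}" using tau_W[OF r] by blast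
  qed
qed

lemma hh_int: "Wd i \<inter> hh i = {0}"
proof
  show "Wd i \<inter> hh i \<subseteq> {0}"
  proof
    fix v assume v: "v \<in> Wd i \<inter> hh i"
    have "v = tau i v" using hh_tau v by simp
    also have "\<dots> = Pi i (\<lambda>l. 0)" unfolding tau_def using sbar_W v by simp
    finally show "v \<in> {0}" by (simp add: Pi_zero)
  qed
  show "{0} \<subseteq> Wd i \<inter> hh i" using R.subspace_0[OF Wd_subspace] R.subspace_0[OF hh_sub] by simp
qed

end



context P8c begin

definition T where "T i d = R.span {rho x v | x v. x \<in> ag d \<and> v \<in> hh i}"

lemma T_sub: "R.subspace (T i d)" unfolding T_def by simp
lemma T_F: "T i d \<subseteq> F i" unfolding T_def
  by (rule R.span_minimal[OF _ F_sub]) (use hh_F F_act in blast)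

lemma Etil_add: "Etil i (\<lambda>l. g l + h l) = (\<lambda>j. Etil i g j + Etil i h j)"
  unfolding Etil_def by (simp add: distrib_right sum.distrib)
lemma Etil_scale: "Etil i (\<lambda>l. sa c (g l)) = (\<lambda>j. sa c (Etil i g j))"
  unfolding Etil_def by (simp add: sa_mult1[symmetric] Va.scale_sum_right)
lemma Etil_zero: "Etil i (\<lambda>l. 0) = (\<lambda>j. 0)" unfolding Etil_def by simp
lemma Etil_sum: "Etil i (\<lambda>l. \<Sum>d\<in>D. G d l) = (\<lambda>j. \<Sum>d\<in>D. Etil i (G d) j)"
  unfolding Etil_def sum_distrib_right by (rule ext, rule sum.swap)

lemma T_rep: assumes "w \<in> T i d"
  shows "\<exists>G. (\<forall>l. G l \<in> ag d) \<and> (\<forall>l\<ge>nn i. G l = 0) \<and> Etil i G = G \<and> Pi i G = w"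
proof -
  let ?Q = "{w. \<exists>G. (\<forall>l. G l \<in> ag d) \<and> (\<forall>l\<ge>nn i. G l = 0) \<and> Etil i G = G \<and> Pi i G = w}"
  have Q: "R.subspace ?Q" unfolding R.subspace_def
  proof (intro conjI ballI allI)
    show "0 \<in> ?Q" using ag0 by (intro CollectI exI[of _ "\<lambda>l. 0"]) (simp add: Etil_zero Pi_zero)
  next
    fix x y assume "x \<in> ?Q" "y \<in> ?Q"
    then obtain G H where G: "\<forall>l. G l \<in> ag d" "\<forall>l\<ge>nn i. G l = 0" "Etil i G = G" "Pi i G = x"
      and H: "\<forall>l. H l \<in> ag d" "\<forall>l\<ge>nn i. H l = 0" "Etil i H = H" "Pi i H = y" by blast
    show "x + y \<in> ?Q"
      using G H Va.subspace_add[OF ag_sub]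
      by (intro CollectI exI[of _ "\<lambda>l. G l + H l"]) (simp add: Etil_add Pi_add)
  next
    fix c x assume "x \<in> ?Q"
    then obtain G where G: "\<forall>l. G l \<in> ag d" "\<forall>l\<ge>nn i. G l = 0" "Etil i G = G" "Pi i G = x" by blast
    show "sR c x \<in> ?Q"
      using G Va.subspace_scale[OF ag_sub]
      by (intro CollectI exI[of _ "\<lambda>l. sa c (G l)"]) (simp add: Etil_scale Pi_scale)
  qed
  have "{rho x v | x v. x \<in> ag d \<and> v \<in> hh i} \<subseteq> ?Q"
  proof
    fix u assume "u \<in> {rho x v | x v. x \<in> ag d \<and> v \<in> hh i}"
    then obtain x v where u: "u = rho x v" "x \<in> ag d" "v \<in> hh i" by blast
    have vF: "v \<in> F i" using u(3) hh_F by blast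
    let ?G = "\<lambda>l. x * sbar i v l"
    have G1: "\<forall>l. ?G l \<in> ag d" using ag_mult[OF u(2) sbar_ag0] by simp
    have G2: "\<forall>l\<ge>nn i. ?G l = 0" using sbar_vanish[OF vF] by simp
    have G4: "Pi i ?G = u" unfolding u(1) Pi_rho[symmetric] using hh_tau[OF u(3)] by (simp add: tau_def)
    have "Etil i (sbar i v) = sbar i v"
      using sbar_Pi[of "sbar i v" i, OF sbar_ag0] sbar_tau[OF vF] by (simp add: tau_def)
    then have e: "\<forall>j. (\<Sum>l<nn i. sbar i v l * dec (ss i (qq i l) j) 0) = sbar i v j"
      unfolding Etil_def by (simp add: fun_eq_iff)
    have G3: "Etil i ?G = ?G"
      unfolding Etil_def using e by (simp add: mult.assoc sum_distrib_left[symmetric] fun_eq_iff)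
    show "u \<in> ?Q" using G1 G2 G3 G4 by (intro CollectI exI[of _ ?G]) simp
  qed
  then have "T i d \<subseteq> ?Q" unfolding T_def by (rule R.span_minimal[OF _ Q])
  then show ?thesis using assms by blast
qed

lemma star:
  assumes D: "finite D" and w: "\<And>d. d \<in> D \<Longrightarrow> w d \<in> T i d"
    and s: "(\<Sum>d\<in>D. w d) \<in> F (i+1)"
  shows "\<forall>d\<in>D. w d = 0"
proof -
  have "\<forall>d\<in>D. \<exists>G. (\<forall>l. G l \<in> ag d) \<and> (\<forall>l\<ge>nn i. G l = 0) \<and> Etil i G = G \<and> Pi i G = w d"
    using T_rep w by blast
  from bchoice[OF this] obtain G where G: "\<And>d. d \<in> D \<Longrightarrow> (\<forall>l. G d l \<in> ag d) \<and> (\<forall>l\<ge>nn i. G d l = 0)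
      \<and> Etil i (G d) = G d \<and> Pi i (G d) = w d" by blast
  define GG where "GG = (\<lambda>l. \<Sum>d\<in>D. G d l)"
  have PG: "Pi i GG = (\<Sum>d\<in>D. w d)" unfolding GG_def Pi_sum using G by simp
  have EG: "Etil i GG = GG" unfolding GG_def Etil_sum using G by (simp add: fun_eq_iff)
  have zero: "(\<Sum>l<nn i. GG l * ss i (qq i l) j) = 0" for j
    using s_U[OF s] PG s_Pi[of i GG] by (metis (mono_tags, lifting))
  have key: "GG j = (\<Sum>l<nn i. GG l * (dec (ss i (qq i l) j) 0 - ss i (qq i l) j))" for j
  proof -
    have "GG j = Etil i GG j" using EG by simp
    also have "\<dots> = (\<Sum>l<nn i. GG l * dec (ss i (qq i l) j) 0) - (\<Sum>l<nn i. GG l * ss i (qq i l) j)"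
      unfolding Etil_def using zero[of j] by simp
    also have "\<dots> = (\<Sum>l<nn i. GG l * (dec (ss i (qq i l) j) 0 - ss i (qq i l) j))"
      by (simp add: sum_subtractf right_diff_distrib)
    finally show ?thesis .
  qed
  have ind: "\<forall>j. GG j \<in> alg_ge sa ag t" for t
  proof (induction t)
    case 0 then show ?case using alg_ge_0 by blast
  next
    case (Suc t)
    show ?case
    proof
      fix j
      have "(\<Sum>l<nn i. GG l * (dec (ss i (qq i l) j) 0 - ss i (qq i l) j)) \<in> alg_ge sa ag (t + 1)"
        by (rule Va.subspace_sum[OF alg_ge_sub]) (use alg_ge_mult Suc dec0_minus in blast)
      then show "GG j \<in> alg_ge sa ag (Suc t)" using key[of j] by simp
    qed
  qed
  obtain D0 where D0: "alg_ge sa ag D0 = {0}" using nilp_ge by blast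
  have GG0: "GG l = 0" for l using ind[of D0] D0 by blast
  show ?thesis
  proof
    fix d assume d: "d \<in> D"
    have "G d l = 0" for l
    proof -
      have "dec (GG l) d = (\<Sum>d'\<in>D. dec (G d' l) d)" unfolding GG_def by (rule dec_sum)
      also have "\<dots> = (\<Sum>d'\<in>D. if d' = d then G d l else 0)"
      proof (rule sum.cong[OF refl])
        fix d' assume "d' \<in> D"
        then have "G d' l \<in> ag d'" using G by blast
        then show "dec (G d' l) d = (if d' = d then G d l else 0)" by (auto simp: dec_hom)
      qed
      also have "\<dots> = G d l" using D d by simp
      finally show ?thesis using GG0[of l] dec_zero by simp
    qed
    then have "G d = (\<lambda>l. 0)" by auto
    then show "w d = 0" using G[OF d] Pi_zero by metis
  qed
qed

lemma indep:
  assumes "finite P" "\<And>p. p \<in> P \<Longrightarrow> w p \<in> T (fst p) (snd p)" "sum w P = 0"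
  shows "\<forall>p\<in>P. w p = 0"
  using assms
proof (induction "card (fst ` P)" arbitrary: P rule: less_induct)
  case less
  show ?case
  proof (cases "P = {}")
    case True then show ?thesis by simp
  next
    case False
    let ?i0 = "Min (fst ` P)"
    define P0 where "P0 = {p\<in>P. fst p = ?i0}"
    define P1 where "P1 = P - P0"
    have finP: "finite (fst ` P)" using less.prems by simp
    have i0P: "?i0 \<in> fst ` P" using False finP by simp
    have fin0: "finite P0" "finite P1" unfolding P0_def P1_def using less.prems by auto
    have split: "sum w P = sum w P0 + sum w P1"
      unfolding P1_def using sum.subset_diff[of P0 P w] less.prems(1) P0_def by auto
    have s1: "sum w P1 \<in> F (?i0 + 1)"
    proof (rule R.subspace_sum[OF F_sub])
      fix p assume p: "p \<in> P1"
      then have "fst p \<ge> ?i0" "fst p \<noteq> ?i0" using finP unfolding P1_def P0_def by auto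
      then have "?i0 + 1 \<le> fst p" by simp
      moreover have "w p \<in> F (fst p)" using T_F less.prems(2) p unfolding P1_def by blast
      ultimately show "w p \<in> F (?i0 + 1)" using F_mono by blast
    qed
    have s0: "sum w P0 \<in> F (?i0 + 1)"
    proof -
      have "sum w P0 = - sum w P1" using split less.prems(3) by (simp add: eq_neg_iff_add_eq_0)
      then show ?thesis using R.subspace_neg[OF F_sub s1] by simp
    qed
    have inj: "inj_on snd P0" unfolding P0_def by (rule inj_onI) (auto simp: prod_eq_iff)
    have re: "sum w P0 = (\<Sum>d\<in>snd ` P0. w (?i0, d))"
    proof -
      have "(\<Sum>d\<in>snd ` P0. w (?i0, d)) = (\<Sum>p\<in>P0. w (?i0, snd p))" by (rule sum.reindex[OF inj, unfolded comp_def])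
      also have "\<dots> = sum w P0" by (rule sum.cong) (auto simp: P0_def prod_eq_iff)
      finally show ?thesis by simp
    qed
    have z0: "\<forall>d\<in>snd ` P0. w (?i0, d) = 0"
    proof (rule star)
      show "finite (snd ` P0)" using fin0 by simp
      show "w (?i0, d) \<in> T ?i0 d" if "d \<in> snd ` P0" for d
        using that less.prems(2) unfolding P0_def by force
      show "(\<Sum>d\<in>snd ` P0. w (?i0, d)) \<in> F (?i0 + 1)" using s0 re by simp
    qed
    then have zP0: "\<forall>p\<in>P0. w p = 0" unfolding P0_def by (auto simp: prod_eq_iff)
    then have "sum w P0 = 0" by simp
    then have sP1: "sum w P1 = 0" using split less.prems(3) by simp
    have "fst ` P1 \<subseteq> fst ` P - {?i0}" unfolding P1_def P0_def by auto
    then have "card (fst ` P1) < card (fst ` P)"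
      using finP i0P by (meson card_Diff1_less card_mono finite_Diff order_le_less_trans)
    then have "\<forall>p\<in>P1. w p = 0"
      using less.hyps[of P1] fin0 sP1 less.prems(2) unfolding P1_def by blast
    then show ?thesis using zP0 unfolding P1_def by blast
  qed
qed

definition S where "S i = R.span {rho x v | x v i' e. i \<le> i' \<and> x \<in> ag e \<and> v \<in> hh i'}"
definition X where "X i = R.span ({rho x v | x v e. x \<in> ag e \<and> v \<in> hh i} \<union> F (i+1))"

lemma Lcore: assumes r: "r \<in> F i" shows "r \<in> X i"
proof -
  obtain D0 where D0: "\<forall>d\<ge>D0. ag d = {0}" using nilp by blast
  have XS: "R.subspace (X i)" unfolding X_def by simp
  have claim: "\<forall>d. D0 \<le> d + t \<longrightarrow> (\<forall>x\<in>ag d. \<forall>r\<in>F i. rho x r \<in> X i)" for t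
  proof (induction t)
    case 0
    show ?case
    proof (intro allI impI ballI)
      fix d x r assume "D0 \<le> d + 0" "x \<in> ag d" "r \<in> F i"
      then have "x = 0" using D0 by auto
      then show "rho x r \<in> X i" using R.subspace_0[OF XS] by simp
    qed
  next
    case (Suc t)
    show ?case
    proof (intro allI impI ballI)
      fix d x r assume d: "D0 \<le> d + Suc t" and x: "x \<in> ag d" and r: "r \<in> F i"
      have ge: "alg_ge sa ag (d+1) \<subseteq> {z. rho z r' \<in> X i}" if r': "r' \<in> F i" for r'
        unfolding alg_ge_def
      proof (rule Va.span_minimal[OF _ sub_rho_a[OF XS]], rule subsetI)
        fix z assume "z \<in> (\<Union>e\<in>{d+1..}. ag e)"
        then obtain e where e: "e \<ge> d + 1" "z \<in> ag e" by auto
        then have "D0 \<le> e + t" using d by simp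
        then show "z \<in> {z. rho z r' \<in> X i}" using Suc e r' by blast
      qed
      have radsub: "rad_flat sa ag sR actR f (F i) \<subseteq> {w. rho x w \<in> X i}" unfolding rad_eq
      proof (rule R.span_minimal[OF _ sub_actR[OF XS]], rule subsetI)
        fix u assume "u \<in> {rho y v | y v. y \<in> alg_ge sa ag 1 \<and> v \<in> F i}"
        then obtain y v where u: "u = rho y v" "y \<in> alg_ge sa ag 1" "v \<in> F i" by blast
        have "x * y \<in> alg_ge sa ag (d + 1)" using alg_ge_mult[OF ag_alg_ge[OF order_refl x] u(2)] .
        then have "rho (x * y) v \<in> X i" using ge[OF u(3)] by blast
        then show "u \<in> {w. rho x w \<in> X i}" using u by (simp add: rho_mult)
      qed
      have F1sub: "F (i+1) \<subseteq> {w. rho x w \<in> X i}"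
        using F_act unfolding X_def by (auto intro: R.span_base)
      have "R.span (F (i+1) \<union> rad_flat sa ag sR actR f (F i)) \<subseteq> {w. rho x w \<in> X i}"
        using radsub F1sub by (intro R.span_minimal[OF _ sub_actR[OF XS]]) auto
      moreover have "r - tau i r \<in> R.span (F (i+1) \<union> rad_flat sa ag sR actR f (F i))"
        using tau_W[OF r] by (simp only: Wd_def)
      ultimately have A: "rho x (r - tau i r) \<in> X i" by blast
      have "tau i r \<in> hh i" unfolding hh_def using r by blast
      then have B: "rho x (tau i r) \<in> X i" unfolding X_def using x by (intro R.span_base) blast
      have "rho x r = rho x (r - tau i r) + rho x (tau i r)" by (simp add: actR_diffv)
      then show "rho x r \<in> X i" using R.subspace_add[OF XS A B] by simp
    qed
  qed
  have "r = rho 1 r" by (simp add: rho_one)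
  also have "\<dots> = (\<Sum>e\<in>{e. dec 1 e \<noteq> 0}. rho (dec 1 e) r)" by (subst dec_eq[of 1]) (rule rho_sumz)
  also have "\<dots> \<in> X i"
    by (rule R.subspace_sum[OF XS]) (use claim[of D0] dec_in r in auto)
  finally show ?thesis .
qed

lemma S_mono: "i \<le> j \<Longrightarrow> S j \<subseteq> S i" unfolding S_def by (rule R.span_mono) (blast intro: order_trans)

lemma Lemma_L: "F i \<subseteq> S i"
proof -
  have k: "F (m + 1 - int k) \<subseteq> S (m + 1 - int k)" for k
  proof (induction k)
    case 0 then show ?case using F_vanish R.span_zero unfolding S_def by simp
  next
    case (Suc k)
    let ?i = "m + 1 - int (Suc k)"
    have i1: "?i + 1 = m + 1 - int k" by simp
    have "X ?i \<subseteq> S ?i" unfolding X_def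
    proof (rule R.span_minimal, rule subsetI)
      fix u assume "u \<in> {rho x v | x v e. x \<in> ag e \<and> v \<in> hh ?i} \<union> F (?i+1)"
      then show "u \<in> S ?i"
      proof
        assume "u \<in> {rho x v | x v e. x \<in> ag e \<and> v \<in> hh ?i}"
        then show ?thesis unfolding S_def by (intro R.span_base) blast
      next
        assume "u \<in> F (?i+1)"
        then have "u \<in> F (m + 1 - int k)" by (subst i1[symmetric])
        with Suc.IH have "u \<in> S (m + 1 - int k)" by blast
        then have "u \<in> S (?i + 1)" by (subst i1)
        then show ?thesis using S_mono[of ?i "?i+1"] by auto
      qed
    qed (simp add: S_def)
    then show ?case using Lcore by blast
  qed
  show ?thesis
  proof (cases "i > m")
    case True then show ?thesis using F_vanish R.span_zero unfolding S_def by simp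
  next
    case False
    then have "i = m + 1 - int (nat (m + 1 - i))" by simp
    then show ?thesis using k[of "nat (m + 1 - i)"] by metis
  qed
qed

definition RG where "RG j = R.span {actR (f x) v | x v i. i \<le> j \<and> x \<in> ag (nat (j - i)) \<and> v \<in> hh i}"

lemma RG_sub: "R.subspace (RG j)" unfolding RG_def by simp

lemma RG_gen: "i \<le> j \<Longrightarrow> x \<in> ag (nat (j - i)) \<Longrightarrow> v \<in> hh i \<Longrightarrow> rho x v \<in> RG j"
  unfolding RG_def by (rule R.span_base) blast

lemma RG_gen': "x \<in> ag e \<Longrightarrow> v \<in> hh i \<Longrightarrow> rho x v \<in> RG (i + int e)"
  by (rule RG_gen) auto

lemma RG_decomp: assumes "v \<in> RG j"
  shows "\<exists>y I. finite I \<and> (\<forall>i\<in>I. i \<le> j \<and> y i \<in> T i (nat (j - i))) \<and> v = sum y I"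
proof -
  let ?Q = "{v. \<exists>y I. finite I \<and> (\<forall>i\<in>I. i \<le> j \<and> y i \<in> T i (nat (j - i))) \<and> v = sum y I}"
  have Q: "R.subspace ?Q" unfolding R.subspace_def
  proof (intro conjI ballI allI)
    show "0 \<in> ?Q" by (intro CollectI exI[of _ "\<lambda>i. 0"] exI[of _ "{}"]) simp
  next
    fix a b assume "a \<in> ?Q" "b \<in> ?Q"
    then obtain y I z J where y: "finite I" "\<forall>i\<in>I. i \<le> j \<and> y i \<in> T i (nat (j - i))" "a = sum y I"
      and z: "finite J" "\<forall>i\<in>J. i \<le> j \<and> z i \<in> T i (nat (j - i))" "b = sum z J" by blast
    define y' where "y' i = (if i \<in> I then y i else 0)" for i
    define z' where "z' i = (if i \<in> J then z i else 0)" for i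
    have "sum y' (I \<union> J) = sum y' I" using y(1) z(1) by (intro sum.mono_neutral_right) (auto simp: y'_def)
    also have "\<dots> = a" unfolding y(3) y'_def by simp
    finally have a: "sum y' (I \<union> J) = a" .
    have "sum z' (I \<union> J) = sum z' J" using y(1) z(1) by (intro sum.mono_neutral_right) (auto simp: z'_def)
    also have "\<dots> = b" unfolding z(3) z'_def by simp
    finally have b: "sum z' (I \<union> J) = b" .
    have T: "\<forall>i\<in>I \<union> J. i \<le> j \<and> y' i + z' i \<in> T i (nat (j - i))"
      using y(2) z(2) R.subspace_add[OF T_sub] R.subspace_0[OF T_sub] unfolding y'_def z'_def by auto
    show "a + b \<in> ?Q"
      using y(1) z(1) T a b
      by (intro CollectI exI[of _ "\<lambda>i. y' i + z' i"] exI[of _ "I \<union> J"]) (simp add: sum.distrib)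
  next
    fix c a assume "a \<in> ?Q"
    then obtain y I where y: "finite I" "\<forall>i\<in>I. i \<le> j \<and> y i \<in> T i (nat (j - i))" "a = sum y I" by blast
    show "sR c a \<in> ?Q"
      using y R.subspace_scale[OF T_sub]
      by (intro CollectI exI[of _ "\<lambda>i. sR c (y i)"] exI[of _ I]) (simp add: R.scale_sum_right)
  qed
  have "{actR (f x) v | x v i. i \<le> j \<and> x \<in> ag (nat (j - i)) \<and> v \<in> hh i} \<subseteq> ?Q"
  proof
    fix u assume "u \<in> {actR (f x) v | x v i. i \<le> j \<and> x \<in> ag (nat (j - i)) \<and> v \<in> hh i}"
    then obtain x v i where u: "u = rho x v" "i \<le> j" "x \<in> ag (nat (j - i))" "v \<in> hh i" by blast
    have "rho x v \<in> T i (nat (j - i))" unfolding T_def using u by (intro R.span_base) blast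
    then show "u \<in> ?Q" using u by (intro CollectI exI[of _ "\<lambda>_. u"] exI[of _ "{i}"]) simp
  qed
  then have "RG j \<subseteq> ?Q" unfolding RG_def by (rule R.span_minimal[OF _ Q])
  then show ?thesis using assms by blast
qed

lemma RG_indep:
  assumes K: "finite K" and z: "\<And>k. k \<in> K \<Longrightarrow> z k \<in> RG k" and s: "sum z K = 0"
  shows "\<forall>k\<in>K. z k = 0"
proof -
  have "\<forall>k\<in>K. \<exists>yI. finite (snd yI) \<and> (\<forall>i\<in>snd yI. i \<le> k \<and> fst yI i \<in> T i (nat (k - i))) \<and> z k = sum (fst yI) (snd yI)"
  proof
    fix k assume kK: "k \<in> K"
    obtain y I where "finite I" "\<forall>i\<in>I. i \<le> k \<and> y i \<in> T i (nat (k - i))" "z k = sum y I"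
      using RG_decomp[OF z[OF kK]] by blast
    then show "\<exists>yI. finite (snd yI) \<and> (\<forall>i\<in>snd yI. i \<le> k \<and> fst yI i \<in> T i (nat (k - i))) \<and> z k = sum (fst yI) (snd yI)"
      by (intro exI[of _ "(y, I)"]) simp
  qed
  from bchoice[OF this] obtain g where g: "\<And>k. k \<in> K \<Longrightarrow> finite (snd (g k)) \<and>
     (\<forall>i\<in>snd (g k). i \<le> k \<and> fst (g k) i \<in> T i (nat (k - i))) \<and> z k = sum (fst (g k)) (snd (g k))" by blast
  define y where "y k = fst (g k)" for k
  define I where "I k = snd (g k)" for k
  have g': "\<And>k. k \<in> K \<Longrightarrow> finite (I k) \<and> (\<forall>i\<in>I k. i \<le> k \<and> y k i \<in> T i (nat (k - i))) \<and> z k = sum (y k) (I k)"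
    using g unfolding y_def I_def by blast
  define Sg where "Sg = (SIGMA k:K. I k)"
  define h where "h = (\<lambda>(k, i). (i, nat (k - i)))"
  define w where "w = (\<lambda>(i, d). y (i + int d) i)"
  have finSg: "finite Sg" unfolding Sg_def using K g' by auto
  have inj: "inj_on h Sg"
  proof (rule inj_onI)
    fix a b assume a: "a \<in> Sg" and b: "b \<in> Sg" and e: "h a = h b"
    obtain k i where ak: "a = (k, i)" by (cases a)
    obtain k' i' where bk: "b = (k', i')" by (cases b)
    have "i \<le> k" "i' \<le> k'" using a b g' unfolding Sg_def ak bk by auto
    then show "a = b" using e unfolding ak bk h_def by auto
  qed
  have wh: "w (h p) = y (fst p) (snd p)" if pS: "p \<in> Sg" for p
  proof -
    obtain k i where p: "p = (k, i)" by (cases p)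
    have "i \<le> k" using pS g' unfolding Sg_def p by auto
    then show ?thesis unfolding p h_def w_def by simp
  qed
  have "sum z K = (\<Sum>k\<in>K. sum (y k) (I k))" using g' by simp
  also have "\<dots> = (\<Sum>p\<in>Sg. y (fst p) (snd p))" unfolding Sg_def
    using K g' by (subst sum.Sigma) (auto simp: case_prod_beta)
  also have "\<dots> = (\<Sum>p\<in>Sg. w (h p))" using wh by simp
  also have "\<dots> = sum w (h ` Sg)" by (rule sum.reindex[OF inj, symmetric, unfolded comp_def])
  finally have sw: "sum w (h ` Sg) = 0" using s by simp
  have Tw: "w q \<in> T (fst q) (snd q)" if qS: "q \<in> h ` Sg" for q
  proof -
    obtain p where p: "p \<in> Sg" "q = h p" using qS by blast
    obtain k i where pk: "p = (k, i)" by (cases p)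
    have "k \<in> K" "i \<in> I k" using p(1) unfolding Sg_def pk by auto
    then have "y k i \<in> T i (nat (k - i))" using g' by blast
    then show ?thesis using wh[OF p(1)] unfolding p(2) pk h_def by simp
  qed
  have "\<forall>q\<in>h ` Sg. w q = 0" by (rule indep[OF _ Tw sw]) (use finSg in auto)
  then have y0: "y k i = 0" if "k \<in> K" "i \<in> I k" for k i
  proof -
    have p: "(k, i) \<in> Sg" unfolding Sg_def using that by simp
    then have "w (h (k, i)) = 0" using \<open>\<forall>q\<in>h ` Sg. w q = 0\<close> by blast
    then show ?thesis using wh[OF p] by simp
  qed
  show ?thesis using g' y0 by simp
qed

lemma S_RG: "r \<in> S i \<Longrightarrow> \<exists>g K. finite K \<and> (\<forall>k. g k \<in> RG k) \<and> (\<forall>k. k \<notin> K \<longrightarrow> g k = 0) \<and> r = sum g K"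
proof -
  let ?Q = "{r. \<exists>g K. finite K \<and> (\<forall>k. g k \<in> RG k) \<and> (\<forall>k. k \<notin> K \<longrightarrow> g k = 0) \<and> r = sum g K}"
  have Q: "R.subspace ?Q" unfolding R.subspace_def
  proof (intro conjI ballI allI)
    show "0 \<in> ?Q" using R.subspace_0[OF RG_sub] by (intro CollectI exI[of _ "\<lambda>i. 0"] exI[of _ "{}"]) simp
  next
    fix a b assume "a \<in> ?Q" "b \<in> ?Q"
    then obtain g K h L where g: "finite K" "\<forall>k. g k \<in> RG k" "\<forall>k. k \<notin> K \<longrightarrow> g k = 0" "a = sum g K"
      and h: "finite L" "\<forall>k. h k \<in> RG k" "\<forall>k. k \<notin> L \<longrightarrow> h k = 0" "b = sum h L" by blast
    have a: "sum g (K \<union> L) = a" using g h by (subst sum.mono_neutral_right[of "K \<union> L" K]) auto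
    have b: "sum h (K \<union> L) = b" using g h by (subst sum.mono_neutral_right[of "K \<union> L" L]) auto
    show "a + b \<in> ?Q"
      using g h a b R.subspace_add[OF RG_sub]
      by (intro CollectI exI[of _ "\<lambda>k. g k + h k"] exI[of _ "K \<union> L"]) (simp add: sum.distrib)
  next
    fix c a assume "a \<in> ?Q"
    then obtain g K where g: "finite K" "\<forall>k. g k \<in> RG k" "\<forall>k. k \<notin> K \<longrightarrow> g k = 0" "a = sum g K" by blast
    show "sR c a \<in> ?Q"
      using g R.subspace_scale[OF RG_sub]
      by (intro CollectI exI[of _ "\<lambda>k. sR c (g k)"] exI[of _ K]) (simp add: R.scale_sum_right)
  qed
  have "{rho x v | x v i' e. i \<le> i' \<and> x \<in> ag e \<and> v \<in> hh i'} \<subseteq> ?Q"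
  proof
    fix u assume "u \<in> {rho x v | x v i' e. i \<le> i' \<and> x \<in> ag e \<and> v \<in> hh i'}"
    then obtain x v i' e where u: "u = rho x v" "x \<in> ag e" "v \<in> hh i'" by blast
    have uR: "u \<in> RG (i' + int e)" using RG_gen'[OF u(2,3)] u(1) by simp
    show "u \<in> ?Q"
      using uR R.subspace_0[OF RG_sub]
      by (intro CollectI exI[of _ "\<lambda>k. if k = i' + int e then u else 0"] exI[of _ "{i' + int e}"]) auto
  qed
  then have "S i \<subseteq> ?Q" unfolding S_def by (rule R.span_minimal[OF _ Q])
  then show "r \<in> S i \<Longrightarrow> ?thesis" by blast
qed

lemma RG_dsum: "is_dsum sR RG"
  unfolding is_dsum_def
proof (intro conjI allI)
  show "R.subspace (RG i)" for i by (rule RG_sub)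
  fix x
  obtain i0 where i0: "F i0 = UNIV" using filt_low by auto
  have xS: "x \<in> S i0" using Lemma_L[of i0] i0 by auto
  obtain g K where g: "finite K" "\<forall>k. g k \<in> RG k" "\<forall>k. k \<notin> K \<longrightarrow> g k = 0" "x = sum g K"
    using S_RG[OF xS] by blast
  have sub: "{k. g k \<noteq> 0} \<subseteq> K" using g by auto
  have fin: "finite {k. g k \<noteq> 0}" using finite_subset[OF sub g(1)] .
  have "sum g K = sum g {k. g k \<noteq> 0}" by (rule sum.mono_neutral_right[OF g(1) sub]) simp
  then have ex: "finite {k. g k \<noteq> 0} \<and> (\<forall>k. g k \<in> RG k) \<and> x = sum g {k. g k \<noteq> 0}"
    using fin g(2) g(4) by simp
  show "\<exists>!g. finite {i. g i \<noteq> 0} \<and> (\<forall>i. g i \<in> RG i) \<and> x = sum g {i. g i \<noteq> 0}"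
  proof (rule ex1I[of _ g])
    show "finite {i. g i \<noteq> 0} \<and> (\<forall>i. g i \<in> RG i) \<and> x = sum g {i. g i \<noteq> 0}" by (rule ex)
    fix g' assume g': "finite {i. g' i \<noteq> 0} \<and> (\<forall>i. g' i \<in> RG i) \<and> x = sum g' {i. g' i \<noteq> 0}"
    let ?U = "{i. g i \<noteq> 0} \<union> {i. g' i \<noteq> 0}"
    have fin': "finite {i. g' i \<noteq> 0}" using g' by blast
    have finU: "finite ?U" using fin fin' by simp
    have "sum g ?U = sum g {i. g i \<noteq> 0}" by (rule sum.mono_neutral_right[OF finU]) auto
    then have s1: "sum g ?U = x" using ex by simp
    have "sum g' ?U = sum g' {i. g' i \<noteq> 0}" by (rule sum.mono_neutral_right[OF finU]) auto
    then have s2: "sum g' ?U = x" using g' by simp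
    have sd: "sum (\<lambda>k. g' k - g k) ?U = 0" using s1 s2 by (simp add: sum_subtractf)
    have md: "g' k - g k \<in> RG k" if "k \<in> ?U" for k
      using ex g' R.subspace_diff[OF RG_sub] by blast
    have "\<forall>k\<in>?U. g' k - g k = 0"
    proof (rule RG_indep)
      show "finite ?U" by (rule finU)
      show "\<And>k. k \<in> ?U \<Longrightarrow> g' k - g k \<in> RG k" by (rule md)
      show "(\<Sum>k\<in>?U. g' k - g k) = 0" by (rule sd)
    qed
    then have U0: "g' k - g k = 0" if "k \<in> ?U" for k using that by blast
    have U: "g' k = g k" if "k \<in> ?U" for k using U0[OF that] by (simp only: right_minus_eq)
    show "g' = g"
    proof
      fix k show "g' k = g k"
      proof (cases "k \<in> ?U")
        case True then show ?thesis using U by blast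
      next
        case False then show ?thesis by simp
      qed
    qed
  qed
qed

end



context P8c begin

lemma RG_act: assumes x: "x \<in> ag e" and v: "v \<in> RG j" shows "rho x v \<in> RG (j + int e)"
proof -
  have "RG j \<subseteq> {v. rho x v \<in> RG (j + int e)}" unfolding RG_def[of j]
  proof (rule R.span_minimal[OF _ sub_actR[OF RG_sub]], rule subsetI)
    fix u assume "u \<in> {actR (f y) w | y w i. i \<le> j \<and> y \<in> ag (nat (j - i)) \<and> w \<in> hh i}"
    then obtain y w i where u: "u = rho y w" "i \<le> j" "y \<in> ag (nat (j - i))" "w \<in> hh i" by blast
    have xy: "x * y \<in> ag (nat (j + int e - i))"
    proof -
      have eq: "nat (j + int e - i) = e + nat (j - i)" using u(2) by arith
      show ?thesis unfolding eq by (rule ag_mult[OF x u(3)])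
    qed
    have "rho (x * y) w \<in> RG (j + int e)" by (rule RG_gen) (use u xy in auto)
    then show "u \<in> {v. rho x v \<in> RG (j + int e)}" using u by (simp add: rho_mult)
  qed
  then show ?thesis using v by blast
qed

lemma MG_sub: "R.subspace (mod_ge sR RG j)" unfolding mod_ge_def by simp
lemma RG_MG: "j \<le> k \<Longrightarrow> v \<in> RG k \<Longrightarrow> v \<in> mod_ge sR RG j"
  unfolding mod_ge_def by (rule R.span_base) auto
lemma MG_mono: "j \<le> k \<Longrightarrow> mod_ge sR RG k \<subseteq> mod_ge sR RG j"
  unfolding mod_ge_def by (rule R.span_mono, rule UN_mono) auto

lemma mg_F: assumes x: "x \<in> alg_ge sa ag e" and r: "r \<in> F i"
  shows "rho x r \<in> mod_ge sR RG (i + int e)"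
proof -
  have "S i \<subseteq> {r. rho x r \<in> mod_ge sR RG (i + int e)}" unfolding S_def
  proof (rule R.span_minimal[OF _ sub_actR[OF MG_sub]], rule subsetI)
    fix u assume "u \<in> {rho y v | y v i' e. i \<le> i' \<and> y \<in> ag e \<and> v \<in> hh i'}"
    then obtain y v i' e' where u: "u = rho y v" "i \<le> i'" "y \<in> ag e'" "v \<in> hh i'" by blast
    have "alg_ge sa ag e \<subseteq> {x. rho x u \<in> mod_ge sR RG (i + int e)}" unfolding alg_ge_def
    proof (rule Va.span_minimal[OF _ sub_rho_a[OF MG_sub]], rule subsetI)
      fix x' assume "x' \<in> (\<Union>e''\<in>{e..}. ag e'')"
      then obtain e'' where e'': "e'' \<ge> e" "x' \<in> ag e''" by auto
      have "rho (x' * y) v \<in> RG (i' + int (e'' + e'))" by (rule RG_gen'[OF ag_mult[OF e''(2) u(3)] u(4)])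
      then have "rho (x' * y) v \<in> mod_ge sR RG (i + int e)" by (rule RG_MG[rotated]) (use u e'' in simp)
      then show "x' \<in> {x. rho x u \<in> mod_ge sR RG (i + int e)}" using u by (simp add: rho_mult)
    qed
    then show "u \<in> {r. rho x r \<in> mod_ge sR RG (i + int e)}" using x by blast
  qed
  then show ?thesis using Lemma_L r by blast
qed

lemma MG_A: assumes v: "v \<in> mod_ge sR RG j" shows "actR z v \<in> mod_ge sR RG j"
proof -
  have gen: "actR z u \<in> mod_ge sR RG j" if k: "j \<le> k" and u: "u \<in> RG k" for k u
  proof -
    have "RG k \<subseteq> {u. actR z u \<in> mod_ge sR RG j}" unfolding RG_def[of k]
    proof (rule R.span_minimal[OF _ sub_actR[OF MG_sub]], rule subsetI)
      fix w assume "w \<in> {actR (f x) v | x v i. i \<le> k \<and> x \<in> ag (nat (k - i)) \<and> v \<in> hh i}"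
      then obtain x u' i where w: "w = rho x u'" "i \<le> k" "x \<in> ag (nat (k - i))" "u' \<in> hh i" by blast
      let ?e = "nat (k - i)"
      let ?I = "VA.span {f x' * y | x' y. x' \<in> alg_ge sa ag ?e}"
      have "f x * 1 \<in> {f x' * y | x' y. x' \<in> alg_ge sa ag ?e}" using ag_alg_ge[OF order_refl w(3)] by blast
      then have "f x * 1 \<in> ?I" by (rule VA.span_base)
      then have fxI: "f x \<in> ?I" by simp
      have zI: "z * f x \<in> ?I" using ideals[unfolded ideal_condition_def, rule_format, OF fxI, of z] by (rule conjunct1)
      have "?I \<subseteq> {a. actR a u' \<in> mod_ge sR RG j}"
      proof (rule VA.span_minimal[OF _ sub_act_A[OF MG_sub]], rule subsetI)
        fix a assume "a \<in> {f x' * y | x' y. x' \<in> alg_ge sa ag ?e}"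
        then obtain x' y where a: "a = f x' * y" "x' \<in> alg_ge sa ag ?e" by blast
        have "actR y u' \<in> F i" using F_act hh_F w(4) by blast
        then have "rho x' (actR y u') \<in> mod_ge sR RG (i + int ?e)" by (rule mg_F[OF a(2)])
        moreover have "i + int ?e = k" using w(2) by simp
        ultimately have "rho x' (actR y u') \<in> mod_ge sR RG j" using MG_mono[OF k] by auto
        then show "a \<in> {a. actR a u' \<in> mod_ge sR RG j}" using a by (simp add: actR_mult)
      qed
      then have "actR (z * f x) u' \<in> mod_ge sR RG j" using zI by blast
      then show "w \<in> {u. actR z u \<in> mod_ge sR RG j}" using w by (simp add: actR_mult)
    qed
    then show ?thesis using u by blast
  qed
  have "mod_ge sR RG j \<subseteq> {v. actR z v \<in> mod_ge sR RG j}" unfolding mod_ge_def[of sR RG j]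
    by (rule R.span_minimal[OF _ sub_actR[OF MG_sub[unfolded mod_ge_def]]])
       (use gen in \<open>auto simp: mod_ge_def\<close>)
  then show ?thesis using v by blast
qed

lemma RG_phi: "\<phi> ` RG j \<subseteq> NG j"
proof -
  have sub: "R.subspace {v. \<phi> v \<in> NG j}"
    by (rule vimage_subspace[where g=\<phi>, OF vs_R vs_N]) (simp_all add: phi_add phi_scale NG_sub)
  have "RG j \<subseteq> {v. \<phi> v \<in> NG j}" unfolding RG_def[of j]
  proof (rule R.span_minimal[OF _ sub], rule subsetI)
    fix u assume "u \<in> {actR (f x) v | x v i. i \<le> j \<and> x \<in> ag (nat (j - i)) \<and> v \<in> hh i}"
    then obtain x v i where u: "u = rho x v" "i \<le> j" "x \<in> ag (nat (j - i))" "v \<in> hh i" by blast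
    have "\<phi> v \<in> NG i" using hh_N u(4) by blast
    then have "actN (f x) (\<phi> v) \<in> NG (i + int (nat (j - i)))" by (rule NG_act[OF u(3)])
    then show "u \<in> {v. \<phi> v \<in> NG j}" using u by (simp add: phi_act)
  qed
  then show ?thesis by blast
qed

lemma RG_adm: "admissible_hybrid sA sR actR f ag RG"
  unfolding admissible_hybrid_def graded_amod_def A_submodule_def
  using mod_R RG_dsum RG_act MG_sub MG_A by blast

lemma main: "\<exists>h :: int \<Rightarrow> 'r set.
     (\<forall>i. h i \<subseteq> F i \<and> module.subspace sR (h i)
          \<and> (\<forall>x\<in>ag 0. \<forall>v\<in>h i. actR (f x) v \<in> h i)
          \<and> {c + v | c v. c \<in> module.span sR (F (i + 1) \<union> rad_flat sa ag sR actR f (F i)) \<and> v \<in> h i}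
              = F i
          \<and> module.span sR (F (i + 1) \<union> rad_flat sa ag sR actR f (F i)) \<inter> h i = {0}
          \<and> \<phi> ` h i \<subseteq> NG i)
     \<and> (let RG = (\<lambda>j. module.span sR
                  {actR (f x) v | x v i. i \<le> j \<and> x \<in> ag (nat (j - i)) \<and> v \<in> h i})
        in admissible_hybrid sA sR actR f ag RG \<and> (\<forall>j. \<phi> ` RG j \<subseteq> NG j))"
proof (intro exI[of _ hh] conjI allI)
  fix i
  show "hh i \<subseteq> F i" by (rule hh_F)
  show "R.subspace (hh i)" by (rule hh_sub)
  show "\<forall>x\<in>ag 0. \<forall>v\<in>hh i. actR (f x) v \<in> hh i" using hh_ag0 by blast
  show "{c + v | c v. c \<in> R.span (F (i + 1) \<union> rad_flat sa ag sR actR f (F i)) \<and> v \<in> hh i} = F i"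
    using hh_compl[of i] by (simp only: Wd_def)
  show "R.span (F (i + 1) \<union> rad_flat sa ag sR actR f (F i)) \<inter> hh i = {0}"
    using hh_int[of i] by (simp only: Wd_def)
  show "\<phi> ` hh i \<subseteq> NG i" by (rule hh_N)
next
  have RGeq: "(\<lambda>j. R.span {actR (f x) v | x v i. i \<le> j \<and> x \<in> ag (nat (j - i)) \<and> v \<in> hh i}) = RG"
    by (simp add: fun_eq_iff RG_def)
  show "let RG = (\<lambda>j. R.span {actR (f x) v | x v i. i \<le> j \<and> x \<in> ag (nat (j - i)) \<and> v \<in> hh i})
        in admissible_hybrid sA sR actR f ag RG \<and> (\<forall>j. \<phi> ` RG j \<subseteq> NG j)"
    unfolding RGeq Let_def using RG_adm RG_phi by blast
qed

end

theorem proposition8p10: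
  fixes sa :: "'k::field \<Rightarrow> 'a::ring_1 \<Rightarrow> 'a" and ag :: "nat \<Rightarrow> 'a set"
    and sA :: "'k \<Rightarrow> 'A::ring_1 \<Rightarrow> 'A" and f :: "'a \<Rightarrow> 'A"
    and sR :: "'k \<Rightarrow> 'r::ab_group_add \<Rightarrow> 'r" and actR :: "'A \<Rightarrow> 'r \<Rightarrow> 'r"
    and F :: "int \<Rightarrow> 'r set"
    and sN :: "'k \<Rightarrow> 'n::ab_group_add \<Rightarrow> 'n" and actN :: "'A \<Rightarrow> 'n \<Rightarrow> 'n"
    and NG :: "int \<Rightarrow> 'n set"
    and m :: int and \<phi> :: "'r \<Rightarrow> 'n"
  assumes alg_a: "k_algebra sa" and graded_a: "pos_graded sa ag"
    and alg_A: "k_algebra sA" and hom_f: "alg_hom sa sA f"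
    and ideals: "ideal_condition sa ag sA f"
    and mod_R: "alg_module sA sR actR"
    and filt_sub: "\<forall>i. A_submodule sR actR (F i)"
    and filt_dec: "\<forall>i. F (i + 1) \<subseteq> F i"
    and filt_low: "\<exists>i0. \<forall>i\<le>i0. F i = UNIV"
    and filt_high: "\<exists>i1. \<forall>i\<ge>i1. F i = {0}"
    and filt_proj: "\<forall>i. proj_quot actR f (F i) (F (i + 1))"
    and N_adm: "admissible_hybrid sA sN actN f ag NG"
    and gen_m: "act_span sN actN f UNIV (NG m) = mod_ge sN NG m"
    and phi_hom: "A_hom sR actR sN actN \<phi>" and phi_surj: "surj \<phi>"
    and phi_filt: "\<forall>i\<le>m. \<phi> ` F i = mod_ge sN NG i"
    and F_vanish: "\<forall>i>m. F i = {0}"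
  shows "\<exists>h :: int \<Rightarrow> 'r set.
     (\<forall>i. h i \<subseteq> F i \<and> module.subspace sR (h i)
          \<and> (\<forall>x\<in>ag 0. \<forall>v\<in>h i. actR (f x) v \<in> h i)
          \<and> {c + v | c v. c \<in> module.span sR (F (i + 1) \<union> rad_flat sa ag sR actR f (F i)) \<and> v \<in> h i}
              = F i
          \<and> module.span sR (F (i + 1) \<union> rad_flat sa ag sR actR f (F i)) \<inter> h i = {0}
          \<and> \<phi> ` h i \<subseteq> NG i)
     \<and> (let RG = (\<lambda>j. module.span sR
                  {actR (f x) v | x v i. i \<le> j \<and> x \<in> ag (nat (j - i)) \<and> v \<in> h i})
        in admissible_hybrid sA sR actR f ag RG \<and> (\<forall>j. \<phi> ` RG j \<subseteq> NG j))"
proof -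
  have P: "P8 sa ag sA f sR actR F sN actN NG m \<phi>"
    unfolding P8_def using assms by blast
  interpret P: P8 sa ag sA f sR actR F sN actN NG m \<phi> by (rule P)
  from P.data_exists obtain nn pp ss qq where d: "\<forall>i. projdata actR f (F i) (F (i+1)) (nn i) (pp i) (ss i) \<and>
   (\<forall>l<nn i. qq i l \<in> F i \<and> \<phi> (qq i l) \<in> NG i \<and> pp i (el l) - qq i l \<in> P.Wd i)"
    by blast
  have C: "P8c sa ag sA f sR actR F sN actN NG m \<phi> nn pp ss qq"
    by (intro P8c.intro P P8c_axioms.intro) (use d in blast)+
  show ?thesis by (rule P8c.main[OF C])
qed

end
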